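(* For all $\mathfrak a,\mathfrak b\in\mathfrak D$ and $d\in\mathbb Z$, $S_{<d}(\mathfrak a\sqcup\!\sqcup\mathfrak b)=S_{<d}(\mathfrak a)S_{<d}(\mathfrak b)$ and $\zeta_A(\mathfrak a\sqcup\!\sqcup\mathfrak b)=\zeta_A(\mathfrak a)\zeta_A(\mathfrak b)$.
   Context: Let $q$ be a prime power, $A=\mathbb F_q[\theta]$, $A_+$ the set of monic polynomials in $A$, and $K_\infty=\mathbb F_q((1/\theta))$. Let $\Gamma=\{x_{n,\varepsilon}\}_{n\in\mathbb N,\varepsilon\in\mathbb F_q^*}$, $\langle\Gamma\rangle$ the set of words over $\Gamma$ (empty word $1$, juxtaposition = concatenation) and $\mathfrak D$ the $\mathbb F_q$-vector space with basis $\langle\Gamma\rangle$; write $x_n:=x_{n,1}$. For positive integers $r,s,j$ put $\Delta^j_{r,s}=(-1)^{r-1}\binom{j-1}{r-1}+(-1)^{s-1}\binom{j-1}{s-1}$ if $(q-1)\mid j$ and $0$ otherwise. The bilinear products $\diamond,\sqcup\!\sqcup$ on $\mathfrak D$ are defined recursively by $1\diamond\mathfrak a=\mathfrak a\diamond1=\mathfrak a$, $1\sqcup\!\sqcup\mathfrak a=\mathfrak a\sqcup\!\sqcup1=\mathfrak a$ and, for nonempty $\mathfrak a=x_{a,\alpha}\mathfrak a_-$, $\mathfrak b=x_{b,\beta}\mathfrak b_-$: $\mathfrak a\diamond\mathfrak b=x_{a+b,\alpha\beta}(\mathfrak a_-\sqcup\!\sqcup\mathfrak b_-)+\sum_{i+j=a+b}\Delta^j_{a,b}x_{i,\alpha\beta}(x_j\sqcup\!\sqcup(\mathfrak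 a_-\sqcup\!\sqcup\mathfrak b_-))$ and $\mathfrak a\sqcup\!\sqcup\mathfrak b=x_{a,\alpha}(\mathfrak a_-\sqcup\!\sqcup\mathfrak b)+x_{b,\beta}(\mathfrak a\sqcup\!\sqcup\mathfrak b_-)+\mathfrak a\diamond\mathfrak b$ ($i,j$ positive integers). For $d\in\mathbb Z$, $S_{<d},\zeta_A:\mathfrak D\to K_\infty$ are the $\mathbb F_q$-linear maps sending $1$ to $1$ and a word $x_{s_1,\varepsilon_1}\cdots x_{s_r,\varepsilon_r}$ to $S_{<d}=\sum \frac{\varepsilon_1^{\deg a_1}\cdots\varepsilon_r^{\deg a_r}}{a_1^{s_1}\cdots a_r^{s_r}}$ over $a_i\in A_+$ with $d>\deg a_1>\cdots>\deg a_r\ge0$, respectively $\zeta_A=$ the same sum over $a_i\in A_+$ with $\deg a_1>\cdots>\deg a_r\ge0$ (alternating multiple zeta values). *)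

theory Defs
  imports "HOL-Computational_Algebra.Polynomial" "HOL-Computational_Algebra.Formal_Laurent_Series"
begin

(* The base field F_q is a finite field type 'a :: {field, finite}; q = CARD('a).
   A letter x_{n,eps} is the pair (n, eps) with n >= 1 and eps <> 0.
   A word is a list of letters (head = leftmost letter). *)

type_synonym 'a letter = "nat \<times> 'a"
type_synonym 'a word = "'a letter list"

definition valid_letter :: "('a::zero) letter \<Rightarrow> bool" where
  "valid_letter l \<longleftrightarrow> fst l \<ge> 1 \<and> snd l \<noteq> 0"

definition valid_word :: "('a::zero) word \<Rightarrow> bool" where
  "valid_word w \<longleftrightarrow> (\<forall>l\<in>set w. valid_letter l)"

(* Elements of the F_q-vector space D with basis the words: finitely supported
   coefficient functions on words, supported on valid words. *)
definition in_D :: "('a::field word \<Rightarrow> 'a) \<Rightarrow> bool" where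
  "in_D f \<longleftrightarrow> finite {w. f w \<noteq> 0} \<and> (\<forall>w. f w \<noteq> 0 \<longrightarrow> valid_word w)"

definition wvec :: "'a word \<Rightarrow> ('a word \<Rightarrow> 'a::field)" where
  "wvec u = (\<lambda>w. if w = u then 1 else 0)"

(* left concatenation with a letter, extended linearly: f |-> l f *)
definition prefix_lin :: "'a letter \<Rightarrow> ('a word \<Rightarrow> 'a::field) \<Rightarrow> ('a word \<Rightarrow> 'a)" where
  "prefix_lin l f = (\<lambda>w. case w of [] \<Rightarrow> 0 | l' # w' \<Rightarrow> (if l' = l then f w' else 0))"

definition lin_ext :: "('a word \<Rightarrow> 'a word \<Rightarrow> ('a word \<Rightarrow> 'a::field))
     \<Rightarrow> ('a word \<Rightarrow> 'a) \<Rightarrow> ('a word \<Rightarrow> 'a) \<Rightarrow> ('a word \<Rightarrow> 'a)" where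
  "lin_ext m f g = (\<lambda>w. \<Sum>u\<in>{u. f u \<noteq> 0}. \<Sum>v\<in>{v. g v \<noteq> 0}. f u * g v * m u v w)"

definition Delta :: "nat \<Rightarrow> nat \<Rightarrow> nat \<Rightarrow> 'a::{field,finite}" where
  "Delta r s j = (if (card (UNIV :: 'a set) - 1) dvd j
      then (-1) ^ (r - 1) * of_nat ((j - 1) choose (r - 1))
         + (-1) ^ (s - 1) * of_nat ((j - 1) choose (s - 1))
      else 0)"

(* the diamond product of two nonempty words, given the shuffle product m
   (used on words of smaller total length) *)
fun dia_of :: "('a word \<Rightarrow> 'a word \<Rightarrow> ('a word \<Rightarrow> 'a::{field,finite}))
     \<Rightarrow> 'a word \<Rightarrow> 'a word \<Rightarrow> ('a word \<Rightarrow> 'a)" where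
  "dia_of m (x # a') (y # b') =
     (\<lambda>w. prefix_lin (fst x + fst y, snd x * snd y) (m a' b') w
        + (\<Sum>i\<in>{1..<fst x + fst y}.
             Delta (fst x) (fst y) (fst x + fst y - i)
             * prefix_lin (i, snd x * snd y)
                 (lin_ext m (wvec [(fst x + fst y - i, 1)]) (m a' b')) w))"
| "dia_of m a b = (\<lambda>w. 0)"

(* shuffle product on words, defined by the recursion of the paper; the first
   argument is fuel (recursion depth), which is always sufficient when it is at
   least the total length of the two words (see shuffle_word) *)
fun sh_fuel :: "nat \<Rightarrow> 'a word \<Rightarrow> 'a word \<Rightarrow> ('a word \<Rightarrow> 'a::{field,finite})" where
  "sh_fuel n [] v = wvec v"
| "sh_fuel n (x # a) [] = wvec (x # a)"
| "sh_fuel 0 (x # a) (y # b) = (\<lambda>w. 0)"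
| "sh_fuel (Suc n) (x # a) (y # b) =
     (\<lambda>w. prefix_lin x (sh_fuel n a (y # b)) w
        + prefix_lin y (sh_fuel n (x # a) b) w
        + dia_of (sh_fuel n) (x # a) (y # b) w)"

definition shuffle_word :: "'a word \<Rightarrow> 'a word \<Rightarrow> ('a word \<Rightarrow> 'a::{field,finite})" where
  "shuffle_word u v = sh_fuel (length u + length v) u v"

definition shuffle :: "('a word \<Rightarrow> 'a::{field,finite}) \<Rightarrow> ('a word \<Rightarrow> 'a) \<Rightarrow> ('a word \<Rightarrow> 'a)" where
  "shuffle f g = lin_ext shuffle_word f g"

(* K_infty = F_q((1/theta)) as Laurent series in X = 1/theta; theta = X^{-1} *)
definition theta :: "'a::field fls" where
  "theta = fls_X_inv"

definition embA :: "'a::field poly \<Rightarrow> 'a fls" where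
  "embA a = poly (map_poly fls_const a) theta"

definition tuples_lt :: "int \<Rightarrow> nat \<Rightarrow> 'a::field poly list set" where
  "tuples_lt d r = {as. length as = r \<and> (\<forall>i<r. lead_coeff (as ! i) = 1)
      \<and> (\<forall>i<r. int (degree (as ! i)) < d)
      \<and> (\<forall>i. Suc i < r \<longrightarrow> degree (as ! Suc i) < degree (as ! i))}"

definition S_word :: "int \<Rightarrow> 'a word \<Rightarrow> 'a::{field,finite} fls" where
  "S_word d w = (\<Sum>as\<in>tuples_lt d (length w).
      \<Prod>i<length w. fls_const (snd (w ! i) ^ degree (as ! i)) / (embA (as ! i)) ^ fst (w ! i))"

definition S_lt :: "int \<Rightarrow> ('a word \<Rightarrow> 'a::{field,finite}) \<Rightarrow> 'a fls" where
  "S_lt d f = (\<Sum>w\<in>{w. f w \<noteq> 0}. fls_const (f w) * S_word d w)"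

(* convergence in K_infty (the 1/theta-adic topology): for every N the coefficients
   of index < N eventually agree with those of the limit *)
definition fls_tendsto :: "(int \<Rightarrow> 'a::zero fls) \<Rightarrow> 'a fls \<Rightarrow> bool" where
  "fls_tendsto F L \<longleftrightarrow> (\<forall>N::int. eventually (\<lambda>d. \<forall>n<N. fls_nth (F d) n = fls_nth L n) at_top)"

(* zeta_A(w) = the (infinite) sum over deg a_1 > ... > deg a_r >= 0,
   i.e. the limit in K_infty of the partial sums S_{<d}(w) as d -> infinity *)
definition zeta_word :: "'a word \<Rightarrow> 'a::{field,finite} fls" where
  "zeta_word w = (THE L. fls_tendsto (\<lambda>d. S_word d w) L)"

definition zeta_A :: "('a word \<Rightarrow> 'a::{field,finite}) \<Rightarrow> 'a fls" where
  "zeta_A f = (\<Sum>w\<in>{w. f w \<noteq> 0}. fls_const (f w) * zeta_word w)"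

end

theory Submission
  imports Defs
begin

notation fls_nth (infixl "$$" 75)


lemma card_ge2: "card (UNIV::'a::{field,finite} set) \<ge> 2"
proof -
  have "{0::'a, 1} \<subseteq> UNIV" by simp
  hence "card {0::'a,1} \<le> card (UNIV::'a set)" by (intro card_mono) auto
  thus ?thesis by simp
qed

lemma of_nat_card_zero: "(of_nat (card (UNIV::'a::{field,finite} set)) :: 'a) = 0"
proof -
  have "(\<Sum>x\<in>(UNIV::'a set). x + 1) = (\<Sum>x\<in>UNIV. x)"
    by (rule sum.reindex_bij_witness[of _ "\<lambda>x. x - 1" "\<lambda>x. x + 1"]) auto
  thus ?thesis by (simp add: sum.distrib)
qed

lemma pow_card_minus1:
  fixes e :: "'a::{field,finite}"
  assumes "e \<noteq> 0" shows "e ^ (card (UNIV::'a set) - 1) = 1"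
proof -
  let ?U = "UNIV - {0::'a}"
  have "(\<Prod>x\<in>?U. e * x) = (\<Prod>x\<in>?U. x)"
    by (rule prod.reindex_bij_witness[of _ "\<lambda>x. x / e" "\<lambda>x. e * x"]) (use assms in auto)
  moreover have "(\<Prod>x\<in>?U. e * x) = e ^ card ?U * (\<Prod>x\<in>?U. x)"
    by (simp add: prod.distrib)
  moreover have "(\<Prod>x\<in>?U. x) \<noteq> 0" by simp
  moreover have "card ?U = card (UNIV::'a set) - 1" by (simp add: card_Diff_singleton)
  ultimately show ?thesis by simp
qed

lemma pow_card_minus1_dvd:
  fixes e :: "'a::{field,finite}"
  assumes "e \<noteq> 0" "(card (UNIV::'a set) - 1) dvd j" shows "e ^ j = 1"
proof -
  from assms(2) obtain k where "j = (card (UNIV::'a set) - 1) * k" by auto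
  thus ?thesis using pow_card_minus1[OF assms(1)] by (simp add: power_mult)
qed

lemma pow_mod_card:
  fixes e :: "'a::{field,finite}"
  assumes "e \<noteq> 0" shows "e ^ j = e ^ (j mod (card (UNIV::'a set) - 1))"
proof -
  have "j = (card (UNIV::'a set) - 1) * (j div (card (UNIV::'a set) - 1)) + j mod (card (UNIV::'a set) - 1)" by simp
  hence "e ^ j = (e ^ (card (UNIV::'a set) - 1)) ^ (j div (card (UNIV::'a set) - 1)) * e ^ (j mod (card (UNIV::'a set) - 1))"
    by (metis power_add power_mult)
  thus ?thesis using pow_card_minus1[OF assms] by simp
qed

lemma exists_nonroot:
  assumes "\<not> (card (UNIV::'a::{field,finite} set) - 1) dvd j"
  shows "\<exists>g::'a. g \<noteq> 0 \<and> g ^ j \<noteq> 1"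
proof (rule ccontr)
  assume "\<not> ?thesis"
  hence H: "\<And>g::'a. g \<noteq> 0 \<Longrightarrow> g ^ j = 1" by auto
  define j' where "j' = j mod (card (UNIV::'a set) - 1)"
  have q2: "card (UNIV::'a set) \<ge> 2" by (rule card_ge2)
  have j'pos: "j' > 0" using assms unfolding j'_def by (metis dvd_eq_mod_eq_0 gr0I)
  have j'lt: "j' < card (UNIV::'a set) - 1" unfolding j'_def using q2 by simp
  define p :: "'a poly" where "p = monom 1 j' + [:-1:]"
  have degp: "degree p = j'" unfolding p_def using j'pos
    by (subst degree_add_eq_left) (auto simp: degree_monom_eq)
  have pnz: "p \<noteq> 0" using degp j'pos by auto
  have "UNIV - {0} \<subseteq> {x. poly p x = 0}"
  proof
    fix x :: 'a assume "x \<in> UNIV - {0}"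
    hence "x ^ j' = 1" using H[of x] pow_mod_card[of x j] unfolding j'_def by simp
    thus "x \<in> {x. poly p x = 0}" by (simp add: p_def poly_monom)
  qed
  hence "card (UNIV - {0::'a}) \<le> card {x. poly p x = 0}" by (intro card_mono) auto
  also have "\<dots> \<le> j'" using card_poly_roots_bound[OF pnz] degp by simp
  finally show False using j'lt by (simp add: card_Diff_singleton)
qed

lemma sum_pow_units:
  "(\<Sum>e\<in>UNIV - {0::'a::{field,finite}}. e ^ j) = (if (card (UNIV::'a set) - 1) dvd j then -1 else 0)"
proof (cases "(card (UNIV::'a set) - 1) dvd j")
  case True
  hence "(\<Sum>e\<in>UNIV - {0::'a}. e ^ j) = (\<Sum>e\<in>UNIV - {0::'a}. 1)"
    by (intro sum.cong) (auto intro: pow_card_minus1_dvd)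
  also have "\<dots> = of_nat (card (UNIV::'a set) - 1)" by (simp add: card_Diff_singleton)
  also have "\<dots> = -1" using of_nat_card_zero[where 'a='a] card_ge2[where 'a='a]
    by (simp add: of_nat_diff)
  finally show ?thesis using True by simp
next
  case False
  obtain g :: 'a where g: "g \<noteq> 0" "g ^ j \<noteq> 1" using exists_nonroot[OF False] by auto
  let ?S = "(\<Sum>e\<in>UNIV - {0::'a}. e ^ j)"
  have "(\<Sum>e\<in>UNIV - {0::'a}. (g * e) ^ j) = ?S"
    by (rule sum.reindex_bij_witness[of _ "\<lambda>x. x / g" "\<lambda>x. g * x"]) (use g in auto)
  hence "g ^ j * ?S = ?S" by (simp add: power_mult_distrib sum_distrib_left)
  hence "(g ^ j - 1) * ?S = 0" by (simp add: algebra_simps)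
  thus ?thesis using g False by simp
qed

lemma minus_one_pow_dvd:
  "(card (UNIV::'a::{field,finite} set) - 1) dvd j \<Longrightarrow> ((-1)::'a) ^ j = 1"
  by (rule pow_card_minus1_dvd) auto


definition PFt :: "'a::field \<Rightarrow> 'a \<Rightarrow> 'a \<Rightarrow> nat \<Rightarrow> nat \<Rightarrow> nat \<Rightarrow> 'a" where
  "PFt u v w r s j = w ^ Suc j * ((-1) ^ Suc s * of_nat (j choose s) * u ^ (Suc (r + s) - j)
      + (-1) ^ (r + j) * of_nat (j choose r) * v ^ (Suc (r + s) - j))"

lemma pf_identity:
  fixes u v w :: "'a::field"
  assumes uv: "u * v = w * (v - u)"
  shows "u ^ Suc r * v ^ Suc s = (\<Sum>j<Suc (r + s). PFt u v w r s j)"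
proof (induction "r + s" arbitrary: r s rule: less_induct)
  case less
  show ?case
  proof (cases r)
    case 0
    show ?thesis
    proof (cases s)
      case 0
      thus ?thesis using \<open>r = 0\<close> uv by (simp add: PFt_def algebra_simps)
    next
      case (Suc s1)
      have IH: "u ^ Suc 0 * v ^ Suc s1 = (\<Sum>j<Suc (0 + s1). PFt u v w 0 s1 j)"
        using less[of 0 s1] Suc \<open>r = 0\<close> by simp
      have "u ^ Suc r * v ^ Suc s = w * (v ^ Suc s - u * v ^ s)"
      proof -
        have "u ^ Suc r * v ^ Suc s = v ^ s * (u * v)" using \<open>r = 0\<close> by simp
        thus ?thesis unfolding uv by (simp add: algebra_simps)
      qed
      also have "\<dots> = w * v ^ Suc s - w * (\<Sum>j<s. PFt u v w 0 s1 j)"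
        using IH Suc by (simp add: algebra_simps)
      also have "\<dots> = PFt u v w r s 0 + (\<Sum>j<s. PFt u v w r s (Suc j))"
      proof -
        have "PFt u v w r s 0 = w * v ^ Suc s"
          using \<open>r = 0\<close> Suc by (simp add: PFt_def)
        moreover have "PFt u v w r s (Suc j) = - (w * PFt u v w 0 s1 j)" if "j < s" for j
        proof -
          have "of_nat (j choose Suc s1) = (0::'a)" using that Suc by (simp add: binomial_eq_0)
          thus ?thesis using \<open>r = 0\<close> Suc that by (simp add: PFt_def algebra_simps Suc_diff_le)
        qed
        ultimately show ?thesis by (simp add: sum_distrib_left sum_negf)
      qed
      also have "\<dots> = (\<Sum>j<Suc (r + s). PFt u v w r s j)"
        using \<open>r = 0\<close> by (simp add: sum.lessThan_Suc_shift del: sum.lessThan_Suc)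
      finally show ?thesis .
    qed
  next
    case (Suc r1)
    show ?thesis
    proof (cases s)
      case 0
      have IH: "u ^ Suc r1 * v ^ Suc 0 = (\<Sum>j<Suc (r1 + 0). PFt u v w r1 0 j)"
        using less[of r1 0] Suc \<open>s = 0\<close> by simp
      have "u ^ Suc r * v ^ Suc s = w * (u ^ r * v - u ^ Suc r)"
      proof -
        have "u ^ Suc r * v ^ Suc s = u ^ r * (u * v)" using \<open>s = 0\<close> by simp
        thus ?thesis unfolding uv by (simp add: algebra_simps)
      qed
      also have "\<dots> = w * (\<Sum>j<r. PFt u v w r1 0 j) - w * u ^ Suc r"
        using IH Suc by (simp add: algebra_simps)
      also have "\<dots> = PFt u v w r s 0 + (\<Sum>j<r. PFt u v w r s (Suc j))"
      proof -
        have "PFt u v w r s 0 = - (w * u ^ Suc r)"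
          using \<open>s = 0\<close> Suc by (simp add: PFt_def)
        moreover have "PFt u v w r s (Suc j) = w * PFt u v w r1 0 j" if "j < r" for j
        proof -
          have "of_nat (j choose Suc r1) = (0::'a)" using that Suc by (simp add: binomial_eq_0)
          thus ?thesis using \<open>s = 0\<close> Suc that by (simp add: PFt_def algebra_simps Suc_diff_le)
        qed
        ultimately show ?thesis by (simp add: sum_distrib_left)
      qed
      also have "\<dots> = (\<Sum>j<Suc (r + s). PFt u v w r s j)"
        using \<open>s = 0\<close> by (simp add: sum.lessThan_Suc_shift del: sum.lessThan_Suc)
      finally show ?thesis .
    next
      case (Suc s1)
      have IH1: "u ^ Suc r1 * v ^ Suc s = (\<Sum>j<Suc (r1 + s). PFt u v w r1 s j)"
        using less[of r1 s] \<open>r = Suc r1\<close> by simp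
      have IH2: "u ^ Suc r * v ^ Suc s1 = (\<Sum>j<Suc (r + s1). PFt u v w r s1 j)"
        using less[of r s1] Suc by simp
      have "u ^ Suc r * v ^ Suc s = w * (u ^ r * v ^ Suc s - u ^ Suc r * v ^ s)"
      proof -
        have "u ^ Suc r * v ^ Suc s = u ^ r * v ^ s * (u * v)" by (simp add: algebra_simps)
        thus ?thesis unfolding uv by (simp add: algebra_simps)
      qed
      also have "\<dots> = w * (\<Sum>j<r + s. PFt u v w r1 s j) - w * (\<Sum>j<r + s. PFt u v w r s1 j)"
        using IH1 IH2 Suc \<open>r = Suc r1\<close> by (simp add: right_diff_distrib)
      also have "\<dots> = PFt u v w r s 0 + (\<Sum>j<r + s. PFt u v w r s (Suc j))"
      proof -
        have "PFt u v w r s 0 = 0"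
          using \<open>r = Suc r1\<close> Suc by (simp add: PFt_def)
        moreover have "PFt u v w r s (Suc j) = w * PFt u v w r1 s j - w * PFt u v w r s1 j"
          if "j < r + s" for j
        proof -
          have e1: "Suc j choose s = (j choose s1) + (j choose s)" using Suc by simp
          have e2: "Suc j choose r = (j choose r1) + (j choose r)" using \<open>r = Suc r1\<close> by simp
          have x1: "Suc (r1 + s) - j = Suc (r + s) - Suc j" using \<open>r = Suc r1\<close> by simp
          have x2: "Suc (r + s1) - j = Suc (r + s) - Suc j" using Suc by simp
          show ?thesis unfolding PFt_def x1 x2 e1 e2 using \<open>r = Suc r1\<close> Suc
            by (simp add: algebra_simps)
        qed
        ultimately show ?thesis by (simp add: sum_distrib_left sum_subtractf)
      qed
      also have "\<dots> = (\<Sum>j<Suc (r + s). PFt u v w r s j)"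
        by (simp add: sum.lessThan_Suc_shift del: sum.lessThan_Suc)
      finally show ?thesis .
    qed
  qed
qed




lemma fls_const_add': "fls_const (a + b) = fls_const a + fls_const (b::'a::ring_1)"
  by (rule fls_eqI) simp
lemma fls_const_diff': "fls_const (a - b) = fls_const a - fls_const (b::'a::ring_1)"
  by (rule fls_eqI) simp
lemma fls_const_of_nat': "fls_const (of_nat n) = (of_nat n :: 'a::ring_1 fls)"
  by (simp add: fls_of_nat)
lemma fls_const_sum': "fls_const (\<Sum>x\<in>A. f x) = (\<Sum>x\<in>A. fls_const (f x :: 'a::ring_1))"
  by (induction A rule: infinite_finite_induct) (auto simp: fls_const_add')

lemma finite_deg_le: "finite {p :: 'a::{zero,finite} poly. degree p \<le> k}"
proof -
  let ?f = "\<lambda>p::'a poly. map (coeff p) [0..<Suc k]"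
  have "inj_on ?f {p. degree p \<le> k}"
  proof (rule inj_onI)
    fix p q :: "'a poly" assume p: "p \<in> {p. degree p \<le> k}" and q: "q \<in> {p. degree p \<le> k}"
      and eq: "?f p = ?f q"
    show "p = q"
    proof (rule poly_eqI)
      fix n show "coeff p n = coeff q n"
      proof (cases "n \<le> k")
        case True
        have "?f p ! n = ?f q ! n" by (simp only: eq)
        thus ?thesis using True by (simp del: upt_Suc add: nth_map_upt)
      next
        case False thus ?thesis using p q by (simp add: coeff_eq_0)
      qed
    qed
  qed
  moreover have "?f ` {p. degree p \<le> k} \<subseteq> {xs. set xs \<subseteq> UNIV \<and> length xs = Suc k}" by auto
  moreover have "finite {xs :: 'a list. set xs \<subseteq> UNIV \<and> length xs = Suc k}"
    by (rule finite_lists_length_eq) simp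
  ultimately show ?thesis by (meson finite_imageD finite_subset)
qed

lemma finite_deg_lt: "finite {p :: 'a::{zero,finite} poly. degree p < k \<and> P p}"
  by (rule finite_subset[OF _ finite_deg_le[of k]]) auto

lemma finite_deg_eq: "finite {p :: 'a::{zero,finite} poly. P p \<and> degree p = k}"
  by (rule finite_subset[OF _ finite_deg_le[of k]]) auto

lemma embA_nth: "embA a $$ n = (if n \<le> 0 then coeff a (nat (-n)) else 0)"
proof (induction a arbitrary: n rule: pCons_induct)
  case 0
  thus ?case by (simp add: embA_def)
next
  case (pCons c p)
  have e: "embA (pCons c p) = fls_const c + fls_shift 1 (embA p)"
    by (simp add: embA_def map_poly_pCons theta_def fls_X_inv_times_conv_shift)
  show ?case
  proof (cases "n < 0")
    case True
    hence "nat (-n) = Suc (nat (- (n+1)))" by simp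
    thus ?thesis using True by (simp add: e pCons.IH)
  next
    case False
    thus ?thesis by (simp add: e pCons.IH)
  qed
qed

lemma embA_diff: "embA (a - b) = embA a - embA b"
  by (rule fls_eqI) (simp add: embA_nth)
lemma embA_add: "embA (a + b) = embA a + embA b"
  by (rule fls_eqI) (simp add: embA_nth)
lemma embA_smult: "embA (smult e a) = fls_const e * embA a"
  by (rule fls_eqI) (simp add: embA_nth)

lemma embA_subdegree:
  assumes "a \<noteq> 0" shows "fls_subdegree (embA a) = - int (degree a)"
  by (rule fls_subdegree_eqI) (use assms in \<open>auto simp: embA_nth coeff_eq_0\<close>)

lemma embA_nonzero: "a \<noteq> 0 \<Longrightarrow> embA a \<noteq> 0"
  by (rule fls_nonzeroI[of _ "- int (degree a)"]) (simp add: embA_nth)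

definition vb :: "int \<Rightarrow> 'a::zero fls \<Rightarrow> bool" where
  "vb m F \<longleftrightarrow> (\<forall>n<m. F $$ n = 0)"

lemma vb_add: "vb m F \<Longrightarrow> vb m G \<Longrightarrow> vb m (F + G)" by (simp add: vb_def)
lemma vb_diff: "vb m F \<Longrightarrow> vb m G \<Longrightarrow> vb m (F - G)" by (simp add: vb_def)
lemma vb_zero: "vb m 0" by (simp add: vb_def)
lemma vb_mono: "vb m F \<Longrightarrow> m' \<le> m \<Longrightarrow> vb m' F" by (simp add: vb_def)
lemma vb_sum: "(\<And>x. x \<in> A \<Longrightarrow> vb m (f x)) \<Longrightarrow> vb m (\<Sum>x\<in>A. f x)"
  by (simp add: vb_def fls_nth_sum)
lemma vb_mult:
  fixes F G :: "'a::field fls"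
  assumes "vb m F" "vb m' G" shows "vb (m + m') (F * G)"
proof (cases "F = 0 \<or> G = 0")
  case True thus ?thesis by (auto simp: vb_def)
next
  case False
  hence "m \<le> fls_subdegree F" "m' \<le> fls_subdegree G"
    using assms by (auto simp: vb_def intro: fls_subdegree_geI)
  thus ?thesis by (auto simp: vb_def intro: fls_times_nth_eq0)
qed
lemma vb_subdeg: "m \<le> fls_subdegree F \<Longrightarrow> vb m F" by (simp add: vb_def)
lemma vb_const: "vb 0 (fls_const c)" by (simp add: vb_def)
lemma vb_prod:
  fixes f :: "_ \<Rightarrow> 'a::field fls"
  shows "(\<And>x. x \<in> A \<Longrightarrow> vb 0 (f x)) \<Longrightarrow> vb 0 (\<Prod>x\<in>A. f x)"
proof (induction A rule: infinite_finite_induct)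
  case (infinite A) thus ?case by (simp add: vb_def)
next
  case empty thus ?case by (simp add: vb_def)
next
  case (insert x F) thus ?case using vb_mult[of 0 "f x" 0] by simp
qed

lemma vb_inv_embA:
  fixes a :: "'a::field poly"
  assumes "a \<noteq> 0"
  shows "vb (int (degree a * s)) (fls_const c / embA a ^ s)"
proof -
  have "fls_subdegree (fls_const c / embA a ^ s) = int (degree a * s)" if "c \<noteq> 0"
    using assms that embA_nonzero[OF assms]
    by (simp add: divide_inverse fls_subdegree_pow embA_subdegree)
  thus ?thesis by (cases "c = 0") (auto simp: vb_def)
qed


definition Mon :: "nat \<Rightarrow> 'a::{field,finite} poly set" where
  "Mon k = {a. lead_coeff a = 1 \<and> degree a = k}"
definition MonLt :: "nat \<Rightarrow> 'a::{field,finite} poly set" where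
  "MonLt k = {a. degree a < k \<and> lead_coeff a = 1}"
definition NZ :: "nat \<Rightarrow> 'a::{field,finite} poly set" where
  "NZ k = {c. degree c < k \<and> c \<noteq> 0}"

lemma finite_Mon: "finite (Mon k)" unfolding Mon_def by (rule finite_deg_eq)
lemma finite_MonLt: "finite (MonLt k)" unfolding MonLt_def by (rule finite_deg_lt)
lemma finite_NZ: "finite (NZ k)" unfolding NZ_def by (rule finite_deg_lt)

lemma Mon_nz: "a \<in> Mon k \<Longrightarrow> a \<noteq> 0" by (auto simp: Mon_def)
lemma MonLt_nz: "a \<in> MonLt k \<Longrightarrow> a \<noteq> 0" by (auto simp: MonLt_def)

lemma NZ_nz: "c \<in> NZ k \<Longrightarrow> c \<noteq> 0" by (simp add: NZ_def)
lemma zero_notin_NZ: "0 \<notin> NZ k" by (simp add: NZ_def)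

lemma inv_const_pow: "inverse (fls_const x ^ j) = fls_const (inverse x :: 'a::field) ^ j"
  by (metis fls_inverse_const power_inverse)

lemma diff_Mon_NZ:
  assumes "a \<in> Mon k" "b \<in> Mon k" "a \<noteq> b" shows "a - b \<in> NZ k"
proof -
  have nz: "a - b \<noteq> 0" using assms by simp
  have le: "degree (a - b) \<le> k" using assms by (intro degree_diff_le) (auto simp: Mon_def)
  have ck: "coeff (a - b) k = 0" using assms by (auto simp: Mon_def)
  have "degree (a - b) \<noteq> k" using ck nz by (metis leading_coeff_0_iff)
  thus ?thesis using le nz by (auto simp: NZ_def)
qed

lemma Mon_minus_NZ:
  assumes "a \<in> Mon k" "c \<in> NZ k" shows "a - c \<in> Mon k" "a + c \<in> Mon k"
proof -
  have dc: "degree c < degree a" using assms by (auto simp: Mon_def NZ_def)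
  have "degree (a + (- c)) = degree a" using dc by (intro degree_add_eq_left) simp
  moreover have "coeff (a - c) (degree a) = 1" using dc assms by (auto simp: Mon_def coeff_eq_0)
  ultimately show "a - c \<in> Mon k" using assms by (auto simp: Mon_def)
  have "degree (a + c) = degree a" using dc by (intro degree_add_eq_left) simp
  moreover have "coeff (a + c) (degree a) = 1" using dc assms by (auto simp: Mon_def coeff_eq_0)
  ultimately show "a + c \<in> Mon k" using assms by (auto simp: Mon_def)
qed

lemma sum_Mon_minus1:
  assumes "a \<in> Mon k"
  shows "(\<Sum>b\<in>{b\<in>Mon k. b \<noteq> a}. f (a - b)) = (\<Sum>c\<in>NZ k. f c)"
  by (rule sum.reindex_bij_witness[of _ "\<lambda>c. a - c" "\<lambda>b. a - b"])
     (use assms in \<open>auto simp: zero_notin_NZ diff_Mon_NZ Mon_minus_NZ dest: NZ_nz\<close>)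

lemma sum_Mon_minus2:
  assumes "b \<in> Mon k"
  shows "(\<Sum>a\<in>{a\<in>Mon k. a \<noteq> b}. f (a - b)) = (\<Sum>c\<in>NZ k. f c)"
  by (rule sum.reindex_bij_witness[of _ "\<lambda>c. b + c" "\<lambda>a. a - b"])
     (use assms in \<open>auto simp: zero_notin_NZ diff_Mon_NZ Mon_minus_NZ dest: NZ_nz\<close>)

lemma sum_NZ:
  "(\<Sum>c\<in>NZ k. g c) = (\<Sum>e\<in>UNIV - {0::'a::{field,finite}}. \<Sum>m\<in>MonLt k. g (smult e m))"
proof -
  have "(\<Sum>e\<in>UNIV - {0::'a}. \<Sum>m\<in>MonLt k. g (smult e m)) =
        (\<Sum>p\<in>(UNIV - {0::'a}) \<times> MonLt k. g (smult (fst p) (snd p)))"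
    by (simp add: sum.cartesian_product case_prod_beta)
  also have "\<dots> = (\<Sum>c\<in>NZ k. g c)"
    by (rule sum.reindex_bij_witness[of _ "\<lambda>c. (lead_coeff c, smult (inverse (lead_coeff c)) c)"
          "\<lambda>p. smult (fst p) (snd p)"])
       (auto simp: NZ_def MonLt_def lead_coeff_smult)
  finally show ?thesis by simp
qed

definition Q :: "nat \<Rightarrow> nat \<Rightarrow> 'a::{field,finite} fls" where
  "Q k s = (\<Sum>a\<in>Mon k. 1 / embA a ^ s)"
definition R :: "nat \<Rightarrow> nat \<Rightarrow> 'a::{field,finite} fls" where
  "R k s = (\<Sum>a\<in>MonLt k. 1 / embA a ^ s)"
definition N :: "nat \<Rightarrow> nat \<Rightarrow> 'a::{field,finite} fls" where
  "N k s = (\<Sum>c\<in>NZ k. 1 / embA c ^ s)"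

lemma N_eq: "N k j = fls_const (if (card (UNIV::'a set) - 1) dvd j then -1 else 0) * (R k j :: 'a::{field,finite} fls)"
proof -
  have "N k j = (\<Sum>e\<in>UNIV - {0::'a}. \<Sum>m\<in>MonLt k. 1 / embA (smult e m) ^ j)"
    unfolding N_def by (rule sum_NZ)
  also have "\<dots> = (\<Sum>e\<in>UNIV - {0::'a}. fls_const (inverse e ^ j) * R k j)"
    unfolding R_def sum_distrib_left
    by (intro sum.cong refl) (simp add: embA_smult power_mult_distrib fls_const_power
        divide_inverse inv_const_pow)
  also have "\<dots> = fls_const (\<Sum>e\<in>UNIV - {0::'a}. inverse e ^ j) * R k j"
    by (simp add: fls_const_sum' sum_distrib_right)
  also have "(\<Sum>e\<in>UNIV - {0::'a}. inverse e ^ j) = (\<Sum>e\<in>UNIV - {0::'a}. e ^ j)"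
    by (rule sum.reindex_bij_witness[of _ inverse inverse]) auto
  finally show ?thesis by (simp add: sum_pow_units)
qed


lemma Q_alt: "Q k n = (\<Sum>a\<in>Mon k. (1 / embA a) ^ n)"
  by (simp add: Q_def power_one_over)
lemma N_alt: "N k n = (\<Sum>c\<in>NZ k. (1 / embA c) ^ n)"
  by (simp add: N_def power_one_over)

lemma sum_Mon_w:
  assumes "a \<in> Mon k"
  shows "(\<Sum>b\<in>{b\<in>Mon k. b \<noteq> a}. (1 / embA (a - b)) ^ m) = (N k m :: 'a::{field,finite} fls)"
  unfolding N_alt by (rule sum_Mon_minus1[OF assms])
lemma sum_Mon_w2:
  assumes "b \<in> Mon k"
  shows "(\<Sum>a\<in>{a\<in>Mon k. a \<noteq> b}. (1 / embA (a - b)) ^ m) = (N k m :: 'a::{field,finite} fls)"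
  unfolding N_alt by (rule sum_Mon_minus2[OF assms])

lemma sum_swap3: "(\<Sum>a\<in>A. \<Sum>b\<in>B a. \<Sum>j\<in>J. f a b j) = (\<Sum>j\<in>J. \<Sum>a\<in>A. \<Sum>b\<in>B a. f a b j)"
proof -
  have "(\<Sum>a\<in>A. \<Sum>b\<in>B a. \<Sum>j\<in>J. f a b j) = (\<Sum>a\<in>A. \<Sum>j\<in>J. \<Sum>b\<in>B a. f a b j)"
    by (rule sum.cong[OF refl], rule sum.swap)
  also have "\<dots> = (\<Sum>j\<in>J. \<Sum>a\<in>A. \<Sum>b\<in>B a. f a b j)" by (rule sum.swap)
  finally show ?thesis .
qed

lemma chenQ:
  "Q k (Suc r) * Q k (Suc s) = (Q k (Suc r + Suc s) :: 'a::{field,finite} fls) +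
    (\<Sum>j<Suc (r + s). ((-1) ^ Suc s * of_nat (j choose s) + (-1) ^ (r + j) * of_nat (j choose r))
        * Q k (Suc (r + s) - j) * N k (Suc j))"
proof -
  define u where "u a = 1 / embA a" for a :: "'a poly"
  define w where "w a b = 1 / embA (a - b)" for a b :: "'a poly"
  define M where "M = (Mon k :: 'a poly set)"
  define \<alpha> where "\<alpha> j = ((-1) ^ Suc s * of_nat (j choose s) :: 'a fls)" for j
  define \<beta> where "\<beta> j = ((-1) ^ (r + j) * of_nat (j choose r) :: 'a fls)" for j
  define e where "e j = Suc (r + s) - j" for j
  have fM: "finite M" unfolding M_def by (rule finite_Mon)
  have pf: "u a ^ Suc r * u b ^ Suc s = (\<Sum>j<Suc (r + s). PFt (u a) (u b) (w a b) r s j)"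
    if "a \<in> M" "b \<in> M" "a \<noteq> b" for a b
  proof (rule pf_identity)
    have A: "embA a \<noteq> 0" "embA b \<noteq> 0" using that Mon_nz embA_nonzero unfolding M_def by blast+
    have C: "embA a - embA b \<noteq> 0" using that embA_nonzero[of "a - b"] by (simp add: embA_diff)
    show "u a * u b = w a b * (u b - u a)"
      unfolding u_def w_def embA_diff using A C by (simp add: field_simps)
  qed
  have "Q k (Suc r) * Q k (Suc s) = (\<Sum>a\<in>M. \<Sum>b\<in>M. u a ^ Suc r * u b ^ Suc s)"
    unfolding Q_alt M_def u_def by (simp add: sum_product)
  also have "\<dots> = (\<Sum>a\<in>M. u a ^ (Suc r + Suc s) + (\<Sum>b\<in>{b\<in>M. b \<noteq> a}. u a ^ Suc r * u b ^ Suc s))"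
  proof (rule sum.cong[OF refl])
    fix a assume a: "a \<in> M"
    have eqM: "M - {a} = {b\<in>M. b \<noteq> a}" by auto
    have "(\<Sum>b\<in>M. u a ^ Suc r * u b ^ Suc s) = u a ^ Suc r * u a ^ Suc s + (\<Sum>b\<in>{b\<in>M. b \<noteq> a}. u a ^ Suc r * u b ^ Suc s)"
      unfolding eqM[symmetric] by (rule sum.remove[OF fM a])
    thus "(\<Sum>b\<in>M. u a ^ Suc r * u b ^ Suc s) = u a ^ (Suc r + Suc s) + (\<Sum>b\<in>{b\<in>M. b \<noteq> a}. u a ^ Suc r * u b ^ Suc s)"
      by (simp add: power_add)
  qed
  also have "\<dots> = Q k (Suc r + Suc s) + (\<Sum>a\<in>M. \<Sum>b\<in>{b\<in>M. b \<noteq> a}. \<Sum>j<Suc (r + s). PFt (u a) (u b) (w a b) r s j)"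
  proof -
    have "(\<Sum>a\<in>M. u a ^ (Suc r + Suc s)) = Q k (Suc r + Suc s)"
      unfolding Q_alt M_def u_def ..
    moreover have "(\<Sum>a\<in>M. \<Sum>b\<in>{b\<in>M. b \<noteq> a}. u a ^ Suc r * u b ^ Suc s)
       = (\<Sum>a\<in>M. \<Sum>b\<in>{b\<in>M. b \<noteq> a}. \<Sum>j<Suc (r + s). PFt (u a) (u b) (w a b) r s j)"
      by (intro sum.cong refl) (rule pf; auto)
    ultimately show ?thesis by (simp only: sum.distrib)
  qed
  also have "(\<Sum>a\<in>M. \<Sum>b\<in>{b\<in>M. b \<noteq> a}. \<Sum>j<Suc (r + s). PFt (u a) (u b) (w a b) r s j)
      = (\<Sum>j<Suc (r + s). \<Sum>a\<in>M. \<Sum>b\<in>{b\<in>M. b \<noteq> a}. \<alpha> j * (u a ^ e j * w a b ^ Suc j))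
      + (\<Sum>j<Suc (r + s). \<Sum>a\<in>M. \<Sum>b\<in>{b\<in>M. b \<noteq> a}. \<beta> j * (u b ^ e j * w a b ^ Suc j))"
  proof -
    have "PFt (u a) (u b) (w a b) r s j = \<alpha> j * (u a ^ e j * w a b ^ Suc j) + \<beta> j * (u b ^ e j * w a b ^ Suc j)"
      for a b j unfolding PFt_def \<alpha>_def \<beta>_def e_def by (simp add: algebra_simps)
    hence "(\<Sum>a\<in>M. \<Sum>b\<in>{b\<in>M. b \<noteq> a}. \<Sum>j<Suc (r + s). PFt (u a) (u b) (w a b) r s j)
      = (\<Sum>a\<in>M. \<Sum>b\<in>{b\<in>M. b \<noteq> a}. \<Sum>j<Suc (r + s). \<alpha> j * (u a ^ e j * w a b ^ Suc j))
      + (\<Sum>a\<in>M. \<Sum>b\<in>{b\<in>M. b \<noteq> a}. \<Sum>j<Suc (r + s). \<beta> j * (u b ^ e j * w a b ^ Suc j))"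
      by (simp only: sum.distrib)
    also have "\<dots> = (\<Sum>j<Suc (r + s). \<Sum>a\<in>M. \<Sum>b\<in>{b\<in>M. b \<noteq> a}. \<alpha> j * (u a ^ e j * w a b ^ Suc j))
      + (\<Sum>j<Suc (r + s). \<Sum>a\<in>M. \<Sum>b\<in>{b\<in>M. b \<noteq> a}. \<beta> j * (u b ^ e j * w a b ^ Suc j))"
      by (rule arg_cong2[where f="(+)"]; rule sum_swap3)
    finally show ?thesis .
  qed
  finally have X: "Q k (Suc r) * Q k (Suc s) = Q k (Suc r + Suc s)
      + (\<Sum>j<Suc (r + s). \<Sum>a\<in>M. \<Sum>b\<in>{b\<in>M. b \<noteq> a}. \<alpha> j * (u a ^ e j * w a b ^ Suc j))
      + (\<Sum>j<Suc (r + s). \<Sum>a\<in>M. \<Sum>b\<in>{b\<in>M. b \<noteq> a}. \<beta> j * (u b ^ e j * w a b ^ Suc j))"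
    by (simp only: add.assoc)
  have hb: "(\<Sum>a\<in>M. \<Sum>b\<in>{b\<in>M. b \<noteq> a}. \<beta> j * (u b ^ e j * w a b ^ Suc j))
      = \<beta> j * (Q k (e j) * N k (Suc j))" for j
  proof -
    have "(\<Sum>a\<in>M. \<Sum>b\<in>{b\<in>M. b \<noteq> a}. \<beta> j * (u b ^ e j * w a b ^ Suc j))
      = \<beta> j * (\<Sum>b\<in>M. u b ^ e j * (\<Sum>a\<in>{a\<in>M. a \<noteq> b}. w a b ^ Suc j))"
    proof -
      have "(\<Sum>a\<in>M. \<Sum>b\<in>{b\<in>M. b \<noteq> a}. \<beta> j * (u b ^ e j * w a b ^ Suc j))
          = (\<Sum>b\<in>M. \<Sum>a\<in>{a\<in>M. b \<noteq> a}. \<beta> j * (u b ^ e j * w a b ^ Suc j))"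
        by (rule sum.swap_restrict[OF fM fM])
      also have "\<dots> = (\<Sum>b\<in>M. \<Sum>a\<in>{a\<in>M. a \<noteq> b}. \<beta> j * (u b ^ e j * w a b ^ Suc j))"
        by (intro sum.cong refl) auto
      finally show ?thesis by (simp add: sum_distrib_left)
    qed
    also have "(\<Sum>b\<in>M. u b ^ e j * (\<Sum>a\<in>{a\<in>M. a \<noteq> b}. w a b ^ Suc j)) = Q k (e j) * N k (Suc j)"
      unfolding Q_alt sum_distrib_right M_def u_def w_def by (intro sum.cong refl) (simp only: sum_Mon_w2)
    finally show ?thesis .
  qed
  have ha: "(\<Sum>a\<in>M. \<Sum>b\<in>{b\<in>M. b \<noteq> a}. \<alpha> j * (u a ^ e j * w a b ^ Suc j))
      = \<alpha> j * (Q k (e j) * N k (Suc j))" for j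
  proof -
    have "(\<Sum>a\<in>M. \<Sum>b\<in>{b\<in>M. b \<noteq> a}. \<alpha> j * (u a ^ e j * w a b ^ Suc j))
      = \<alpha> j * (\<Sum>a\<in>M. u a ^ e j * (\<Sum>b\<in>{b\<in>M. b \<noteq> a}. w a b ^ Suc j))"
      by (simp add: sum_distrib_left)
    also have "(\<Sum>a\<in>M. u a ^ e j * (\<Sum>b\<in>{b\<in>M. b \<noteq> a}. w a b ^ Suc j)) = Q k (e j) * N k (Suc j)"
      unfolding Q_alt sum_distrib_right M_def u_def w_def by (intro sum.cong refl) (simp only: sum_Mon_w)
    finally show ?thesis .
  qed
  have "Q k (Suc r) * Q k (Suc s) = Q k (Suc r + Suc s)
      + (\<Sum>j<Suc (r + s). \<alpha> j * (Q k (e j) * N k (Suc j)))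
      + (\<Sum>j<Suc (r + s). \<beta> j * (Q k (e j) * N k (Suc j)))"
    using X by (simp only: ha hb)
  also have "\<dots> = Q k (Suc r + Suc s) + (\<Sum>j<Suc (r + s). (\<alpha> j + \<beta> j) * Q k (e j) * N k (Suc j))"
    by (simp add: sum.distrib[symmetric] distrib_right mult.assoc)
  finally show ?thesis unfolding \<alpha>_def \<beta>_def e_def .
qed


lemma fls_const_mult': "fls_const (a * b) = fls_const a * fls_const (b::'a::ring_1)"
  by simp

lemma coef_eq:
  fixes r s j :: nat
  shows "((-1) ^ Suc s * of_nat (j choose s) + (-1) ^ (r + j) * of_nat (j choose r))
      * fls_const (if (card (UNIV::'a set) - 1) dvd Suc j then -1 else 0)
    = fls_const (Delta (Suc r) (Suc s) (Suc j) :: 'a::{field,finite})"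
proof -
  have e: "((-1) ^ Suc s * of_nat (j choose s) + (-1) ^ (r + j) * of_nat (j choose r) :: 'a fls)
     = fls_const ((-1) ^ Suc s * of_nat (j choose s) + (-1) ^ (r + j) * of_nat (j choose r))"
    by (simp only: fls_const_add' fls_const_mult' fls_const_power fls_const_uminus fls_const_1 fls_const_of_nat')
  show ?thesis
  proof (cases "(card (UNIV::'a set) - 1) dvd Suc j")
    case True
    have "((-1::'a) ^ Suc j) = 1" using minus_one_pow_dvd[OF True] .
    hence mj: "((-1::'a) ^ j) = -1" by (simp add: minus_equation_iff)
    define X where "X = ((-1) ^ Suc s * of_nat (j choose s) + (-1) ^ (r + j) * of_nat (j choose r) :: 'a)"
    have H: "X * (-1)
       = (-1) ^ (Suc r - 1) * of_nat ((Suc j - 1) choose (Suc r - 1))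
         + (-1) ^ (Suc s - 1) * (of_nat ((Suc j - 1) choose (Suc s - 1)) :: 'a)"
      unfolding X_def by (simp add: power_add mj algebra_simps)
    have "fls_const X * fls_const (if (card (UNIV::'a set) - 1) dvd Suc j then -1 else 0) = fls_const (X * (-1))"
      using True by (simp only: if_P fls_const_mult')
    also have "\<dots> = fls_const (Delta (Suc r) (Suc s) (Suc j))"
      unfolding H Delta_def using True by (simp only: if_P)
    finally show ?thesis unfolding e X_def .
  next
    case False
    thus ?thesis by (simp add: Delta_def)
  qed
qed

lemma chenD:
  assumes "r \<ge> 1" "s \<ge> 1"
  shows "Q k r * Q k s = (Q k (r + s) :: 'a::{field,finite} fls)
     + (\<Sum>i\<in>{1..<r + s}. fls_const (Delta r s (r + s - i)) * Q k i * R k (r + s - i))"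
proof -
  obtain r' s' where rs: "r = Suc r'" "s = Suc s'" using assms by (metis Suc_pred' less_eq_Suc_le One_nat_def)
  have "Q k r * Q k s = Q k (r + s) + (\<Sum>j<Suc (r' + s').
      fls_const (Delta r s (Suc j)) * Q k (Suc (r' + s') - j) * R k (Suc j))"
    unfolding rs chenQ N_eq
    by (simp add: coef_eq[symmetric] mult.assoc mult.left_commute[of _ "fls_const _"] del: fls_const_mult_const)
  also have "(\<Sum>j<Suc (r' + s'). fls_const (Delta r s (Suc j)) * Q k (Suc (r' + s') - j) * R k (Suc j))
     = (\<Sum>i\<in>{1..<r + s}. fls_const (Delta r s (r + s - i)) * Q k i * R k (r + s - i))"
    by (rule sum.reindex_bij_witness[of _ "\<lambda>i. Suc (r' + s') - i" "\<lambda>j. Suc (r' + s') - j"])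
       (auto simp: rs Suc_diff_le)
  finally show ?thesis .
qed


definition Pd :: "nat \<Rightarrow> 'a letter \<Rightarrow> 'a::{field,finite} fls" where
  "Pd k x = fls_const (snd x ^ k) * Q k (fst x)"

lemma Pd_alt: "Pd k x = (\<Sum>a\<in>Mon k. fls_const (snd x ^ degree a) / embA a ^ fst x)"
  unfolding Pd_def Q_def sum_distrib_left by (intro sum.cong refl) (auto simp: Mon_def)

lemma tuples_0: "tuples_lt d 0 = {[]}"
  by (auto simp: tuples_lt_def)

lemma S_word_Nil: "S_word d [] = 1"
  by (simp add: S_word_def tuples_0)

lemma tuples_neg: "d \<le> 0 \<Longrightarrow> tuples_lt d (Suc r) = {}"
  by (auto simp: tuples_lt_def)

lemma S_word_neg: "d \<le> 0 \<Longrightarrow> S_word d (x # w) = 0"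
  by (simp add: S_word_def tuples_neg)

lemma decr_chain:
  assumes "\<forall>i. Suc i < r \<longrightarrow> degree (as ! Suc i) < degree (as ! i)"
  shows "0 < i \<Longrightarrow> i < r \<Longrightarrow> degree (as ! i) < degree (as ! 0)"
proof (induction i)
  case 0 thus ?case by simp
next
  case (Suc i)
  thus ?case using assms by (cases "i = 0") (auto dest: spec[of _ i])
qed

lemma int_lt_nat: "int n < d \<Longrightarrow> n \<le> nat d"
  by (cases d) auto

lemma finite_tuples: "finite (tuples_lt d r :: 'a::{field,finite} poly list set)"
proof -
  have "tuples_lt d r \<subseteq> {as. set as \<subseteq> {p. degree p \<le> nat d} \<and> length as = r}"
    using int_lt_nat by (fastforce simp: tuples_lt_def in_set_conv_nth)
  moreover have "finite {as. set as \<subseteq> {p :: 'a poly. degree p \<le> nat d} \<and> length as = r}"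
    by (rule finite_lists_length_eq) (rule finite_deg_le)
  ultimately show ?thesis by (rule finite_subset)
qed

lemma tuples_hd: "bs \<in> tuples_lt d (Suc r) \<Longrightarrow> int (degree (bs ! 0)) < d"
  by (simp add: tuples_lt_def)

lemma tuples_split:
  fixes d :: int
  assumes "d \<ge> 0"
  shows "tuples_lt (d + 1) (Suc r) = (tuples_lt d (Suc r) :: 'a::{field,finite} poly list set) \<union> (\<lambda>(a, as). a # as) ` (Mon (nat d) \<times> tuples_lt d r)"
proof (intro equalityI subsetI)
  fix bs :: "'a poly list" assume bs: "bs \<in> tuples_lt (d + 1) (Suc r)"
  then obtain a as where bsd: "bs = a # as" by (cases bs) (auto simp: tuples_lt_def)
  have len: "length as = r" using bs bsd by (simp add: tuples_lt_def)
  have dec: "\<forall>i. Suc i < Suc r \<longrightarrow> degree (bs ! Suc i) < degree (bs ! i)"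
    using bs by (simp add: tuples_lt_def)
  show "bs \<in> tuples_lt d (Suc r) \<union> (\<lambda>(a, as). a # as) ` (Mon (nat d) \<times> tuples_lt d r)"
  proof (cases "int (degree a) < d")
    case True
    have "int (degree (bs ! i)) < d" if "i < Suc r" for i
    proof (cases "i = 0")
      case True thus ?thesis using \<open>int (degree a) < d\<close> bsd by simp
    next
      case False
      thus ?thesis using decr_chain[OF dec, of i] that \<open>int (degree a) < d\<close> bsd by simp
    qed
    thus ?thesis using bs by (auto simp: tuples_lt_def)
  next
    case False
    hence da: "degree a = nat d" using bs bsd assms by (auto simp: tuples_lt_def dest: spec[of _ 0])
    have "lead_coeff a = 1" using bs bsd by (auto simp: tuples_lt_def dest: spec[of _ 0])
    hence aM: "a \<in> Mon (nat d)" using da by (simp add: Mon_def)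
    have "int (degree (as ! i)) < d" if "i < r" for i
      using decr_chain[OF dec, of "Suc i"] that bsd da assms by simp
    moreover have "lead_coeff (as ! i) = 1" if "i < r" for i
      using bs bsd that by (auto simp: tuples_lt_def dest: spec[of _ "Suc i"])
    moreover have "degree (as ! Suc i) < degree (as ! i)" if "Suc i < r" for i
      using dec bsd that by (auto dest: spec[of _ "Suc i"])
    ultimately have "as \<in> tuples_lt d r" using len by (auto simp: tuples_lt_def)
    thus ?thesis using aM bsd by auto
  qed
next
  fix bs :: "'a poly list" assume "bs \<in> tuples_lt d (Suc r) \<union> (\<lambda>(a, as). a # as) ` (Mon (nat d) \<times> tuples_lt d r)"
  thus "bs \<in> tuples_lt (d + 1) (Suc r)"
  proof
    assume "bs \<in> tuples_lt d (Suc r)" thus ?thesis by (auto simp: tuples_lt_def)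
  next
    assume "bs \<in> (\<lambda>(a, as). a # as) ` (Mon (nat d) \<times> tuples_lt d r)"
    then obtain a as where bsd: "bs = a # as" and aM: "a \<in> Mon (nat d)" and as: "as \<in> tuples_lt d r"
      by auto
    have "lead_coeff (bs ! i) = 1" if "i < Suc r" for i
      using aM as bsd that by (cases i) (auto simp: Mon_def tuples_lt_def)
    moreover have "int (degree (bs ! i)) < d + 1" if "i < Suc r" for i
      using aM as bsd that assms by (cases i) (auto simp: Mon_def tuples_lt_def)
    moreover have "degree (bs ! Suc i) < degree (bs ! i)" if "Suc i < Suc r" for i
      using aM as bsd that assms by (cases i) (auto simp: Mon_def tuples_lt_def)
    ultimately show ?thesis using as bsd by (auto simp: tuples_lt_def)
  qed
qed

lemma S_word_rec:
  assumes "d \<ge> 0"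
  shows "S_word (d + 1) (x # w) = S_word d (x # w) + Pd (nat d) x * S_word d w"
proof -
  define t where "t ws bs = (\<Prod>i<length ws. fls_const (snd (ws ! i) ^ degree (bs ! i)) / (embA (bs ! i)) ^ fst (ws ! i))"
    for ws :: "'a letter list" and bs :: "'a poly list"
  have disj: "(tuples_lt d (Suc (length w)) :: 'a poly list set) \<inter> (\<lambda>(a, as). a # as) ` (Mon (nat d) \<times> tuples_lt d (length w)) = {}"
  proof (rule ccontr)
    assume "\<not> ?thesis"
    then obtain bs :: "'a poly list" where b1: "bs \<in> tuples_lt d (Suc (length w))"
      and "bs \<in> (\<lambda>(a, as). a # as) ` (Mon (nat d) \<times> tuples_lt d (length w))" by blast
    then obtain a as where "bs = a # as" "a \<in> Mon (nat d)" by auto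
    moreover have "int (degree (bs ! 0)) < d" using tuples_hd[OF b1] .
    ultimately show False using assms by (simp add: Mon_def)
  qed
  have inj: "inj_on (\<lambda>(a, as). a # as) (Mon (nat d) \<times> (tuples_lt d (length w) :: 'a poly list set))"
    by (auto simp: inj_on_def)
  have "S_word (d + 1) (x # w) = (\<Sum>bs\<in>tuples_lt (d + 1) (Suc (length w)). t (x # w) bs)"
    by (simp add: S_word_def t_def)
  also have "\<dots> = (\<Sum>bs\<in>tuples_lt d (Suc (length w)). t (x # w) bs)
      + (\<Sum>bs\<in>(\<lambda>(a, as). a # as) ` (Mon (nat d) \<times> tuples_lt d (length w)). t (x # w) bs)"
    unfolding tuples_split[OF assms]
    by (rule sum.union_disjoint) (auto intro: finite_tuples finite_Mon simp: disj)
  also have "(\<Sum>bs\<in>tuples_lt d (Suc (length w)). t (x # w) bs) = S_word d (x # w)"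
    by (simp add: S_word_def t_def)
  also have "(\<Sum>bs\<in>(\<lambda>(a, as). a # as) ` (Mon (nat d) \<times> tuples_lt d (length w)). t (x # w) bs)
      = (\<Sum>p\<in>Mon (nat d) \<times> tuples_lt d (length w). t (x # w) (fst p # snd p))"
    by (subst sum.reindex[OF inj]) (simp add: case_prod_beta)
  also have "\<dots> = (\<Sum>a\<in>Mon (nat d). \<Sum>as\<in>tuples_lt d (length w).
        fls_const (snd x ^ degree a) / embA a ^ fst x * t w as)"
    unfolding sum.cartesian_product t_def
    by (simp add: prod.lessThan_Suc_shift case_prod_beta del: prod.lessThan_Suc)
  also have "\<dots> = Pd (nat d) x * S_word d w"
    by (simp add: Pd_alt S_word_def t_def sum_product)
  finally show ?thesis .
qed


definition good :: "'a word \<Rightarrow> bool" where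
  "good w \<longleftrightarrow> (\<forall>l\<in>set w. 1 \<le> fst l)"

lemma good_Nil[simp]: "good []" by (simp add: good_def)
lemma good_Cons[simp]: "good (l # w) \<longleftrightarrow> 1 \<le> fst l \<and> good w" by (simp add: good_def)

lemma sum_nz: "(\<Sum>i\<in>I. f i) \<noteq> 0 \<Longrightarrow> \<exists>i\<in>I. f i \<noteq> 0"
  by (meson sum.neutral)

lemma lin_ext_nz:
  assumes "lin_ext m f g w \<noteq> 0"
  shows "\<exists>u v. f u \<noteq> 0 \<and> g v \<noteq> 0 \<and> m u v w \<noteq> 0"
proof -
  from assms obtain u where u: "u \<in> {u. f u \<noteq> 0}"
    and "(\<Sum>v\<in>{v. g v \<noteq> 0}. f u * g v * m u v w) \<noteq> 0"
    unfolding lin_ext_def by (blast dest: sum_nz)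
  then obtain v where v: "v \<in> {v. g v \<noteq> 0}" and "f u * g v * m u v w \<noteq> 0"
    by (blast dest: sum_nz)
  thus ?thesis using u by auto
qed

lemma prefix_nz: "prefix_lin l f w \<noteq> 0 \<Longrightarrow> \<exists>w'. w = l # w' \<and> f w' \<noteq> 0"
  by (cases w) (auto simp: prefix_lin_def split: if_splits)

lemma wvec_nz: "wvec u w \<noteq> 0 \<Longrightarrow> w = u"
  by (simp add: wvec_def split: if_splits)

lemma supp_prefix: "{w. prefix_lin l f w \<noteq> 0} \<subseteq> (\<lambda>w. l # w) ` {w. f w \<noteq> 0}"
  by (auto dest!: prefix_nz)

lemma supp_lin_ext: "{w. lin_ext m f g w \<noteq> 0} \<subseteq> (\<Union>u\<in>{u. f u \<noteq> 0}. \<Union>v\<in>{v. g v \<noteq> 0}. {w. m u v w \<noteq> 0})"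
  by (auto dest!: lin_ext_nz)

lemma finite_supp_prefix: "finite {w. f w \<noteq> 0} \<Longrightarrow> finite {w. prefix_lin l f w \<noteq> 0}"
  by (rule finite_subset[OF supp_prefix]) auto

lemma finite_supp_lin_ext:
  "finite {u. f u \<noteq> 0} \<Longrightarrow> finite {v. g v \<noteq> 0} \<Longrightarrow> (\<And>u v. finite {w. m u v w \<noteq> 0})
    \<Longrightarrow> finite {w. lin_ext m f g w \<noteq> 0}"
  by (rule finite_subset[OF supp_lin_ext]) auto

lemma finite_supp_wvec: "finite {w. wvec u w \<noteq> 0}"
  by (rule finite_subset[of _ "{u}"]) (auto dest: wvec_nz)

lemma finite_supp_add: "finite {w. f w \<noteq> 0} \<Longrightarrow> finite {w. g w \<noteq> 0} \<Longrightarrow> finite {w. f w + g w \<noteq> (0::'a::comm_monoid_add)}"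
  by (rule finite_subset[of _ "{w. f w \<noteq> 0} \<union> {w. g w \<noteq> 0}"]) auto

lemma finite_supp_sum: "finite I \<Longrightarrow> (\<And>i. i \<in> I \<Longrightarrow> finite {w. f i w \<noteq> 0})
   \<Longrightarrow> finite {w. (\<Sum>i\<in>I. f i w) \<noteq> (0::'a::comm_monoid_add)}"
  by (rule finite_subset[of _ "\<Union>i\<in>I. {w. f i w \<noteq> 0}"]) (auto dest: sum_nz)

lemma finite_supp_scale: "finite {w. f w \<noteq> 0} \<Longrightarrow> finite {w. c * f w \<noteq> (0::'a::field)}"
  by (rule finite_subset[of _ "{w. f w \<noteq> 0}"]) auto

lemma shf_supp:
  "sh_fuel n u v w \<noteq> 0 \<Longrightarrow> length w \<le> length u + length v \<and> (good u \<longrightarrow> good v \<longrightarrow> good w)"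
proof (induction n arbitrary: u v w)
  case 0
  thus ?case by (cases u; cases v) (auto dest: wvec_nz)
next
  case (Suc n)
  show ?case
  proof (cases u)
    case Nil thus ?thesis using Suc.prems by (auto dest: wvec_nz)
  next
    case (Cons x a)
    note u = this
    show ?thesis
    proof (cases v)
      case Nil thus ?thesis using Suc.prems u by (auto dest: wvec_nz simp del: good_Cons)
    next
      case (Cons y b)
      note v = this
      let ?z = "(fst x + fst y, snd x * snd y)"
      let ?G = "\<lambda>i. lin_ext (sh_fuel n) (wvec [(fst x + fst y - i, 1)]) (sh_fuel n a b)"
      have "prefix_lin x (sh_fuel n a (y # b)) w \<noteq> 0 \<or> prefix_lin y (sh_fuel n (x # a) b) w \<noteq> 0
        \<or> prefix_lin ?z (sh_fuel n a b) w \<noteq> 0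
        \<or> (\<Sum>i\<in>{1..<fst x + fst y}. Delta (fst x) (fst y) (fst x + fst y - i) * prefix_lin (i, snd x * snd y) (?G i) w) \<noteq> 0"
        using Suc.prems u v by auto
      thus ?thesis
      proof (elim disjE)
        assume "prefix_lin x (sh_fuel n a (y # b)) w \<noteq> 0"
        then obtain w' where "w = x # w'" "sh_fuel n a (y # b) w' \<noteq> 0" by (blast dest: prefix_nz)
        thus ?thesis using Suc.IH[of a "y # b" w'] u v by auto
      next
        assume "prefix_lin y (sh_fuel n (x # a) b) w \<noteq> 0"
        then obtain w' where "w = y # w'" "sh_fuel n (x # a) b w' \<noteq> 0" by (blast dest: prefix_nz)
        thus ?thesis using Suc.IH[of "x # a" b w'] u v by auto
      next
        assume "prefix_lin ?z (sh_fuel n a b) w \<noteq> 0"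
        then obtain w' where "w = ?z # w'" "sh_fuel n a b w' \<noteq> 0" by (blast dest: prefix_nz)
        thus ?thesis using Suc.IH[of a b w'] u v by auto
      next
        assume "(\<Sum>i\<in>{1..<fst x + fst y}. Delta (fst x) (fst y) (fst x + fst y - i) * prefix_lin (i, snd x * snd y) (?G i) w) \<noteq> 0"
        from sum_nz[OF this] obtain i where i: "i \<in> {1..<fst x + fst y}"
          and "Delta (fst x) (fst y) (fst x + fst y - i) * prefix_lin (i, snd x * snd y) (?G i) w \<noteq> 0"
          by blast
        hence "prefix_lin (i, snd x * snd y) (?G i) w \<noteq> 0" by simp
        from prefix_nz[OF this] obtain w' where w: "w = (i, snd x * snd y) # w'" and "?G i w' \<noteq> 0" by blast
        from lin_ext_nz[OF this(2)] obtain u0 v0 where wv: "wvec [(fst x + fst y - i, 1)] u0 \<noteq> 0" and v0: "sh_fuel n a b v0 \<noteq> 0"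
          and w': "sh_fuel n u0 v0 w' \<noteq> 0" by blast
        have u0: "u0 = [(fst x + fst y - i, 1)]" using wvec_nz[OF wv] .
        have "length v0 \<le> length a + length b" "good a \<longrightarrow> good b \<longrightarrow> good v0" using Suc.IH[OF v0] by auto
        moreover have "length w' \<le> length u0 + length v0" "good u0 \<longrightarrow> good v0 \<longrightarrow> good w'"
          using Suc.IH[OF w'] by auto
        ultimately show ?thesis using u v w u0 i by auto
      qed
    qed
  qed
qed

lemma shf_finite: "finite {w. sh_fuel n u v w \<noteq> 0}"
proof (induction n arbitrary: u v)
  case 0
  thus ?case by (cases u; cases v) (auto intro: finite_supp_wvec)
next
  case (Suc n)
  show ?case
  proof (cases u)
    case Nil thus ?thesis by (auto intro: finite_supp_wvec)
  next
    case (Cons x a)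
    show ?thesis
    proof (cases v)
      case Nil thus ?thesis using Cons by (auto intro: finite_supp_wvec)
    next
      case (Cons y b)
      show ?thesis unfolding \<open>u = x # a\<close> Cons sh_fuel.simps dia_of.simps
        by (intro finite_supp_add finite_supp_prefix finite_supp_sum finite_supp_scale
            finite_supp_lin_ext finite_supp_wvec Suc.IH finite_atLeastLessThan)
    qed
  qed
qed

lemma lin_ext_cong:
  assumes "\<And>u v. f u \<noteq> 0 \<Longrightarrow> g v \<noteq> 0 \<Longrightarrow> m u v = m' u v"
  shows "lin_ext m f g = lin_ext m' f g"
  unfolding lin_ext_def using assms by (intro ext sum.cong refl) auto

lemma shf_fuel:
  "length u + length v \<le> n1 \<Longrightarrow> length u + length v \<le> n2 \<Longrightarrow> sh_fuel n1 u v = sh_fuel n2 u v"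
proof (induction "length u + length v" arbitrary: u v n1 n2 rule: less_induct)
  case less
  show ?case
  proof (cases u)
    case Nil thus ?thesis by simp
  next
    case (Cons x a)
    note u = this
    show ?thesis
    proof (cases v)
      case Nil thus ?thesis using u by simp
    next
      case (Cons y b)
      note v = this
      obtain n1' where n1: "n1 = Suc n1'" using less.prems u v by (cases n1) auto
      obtain n2' where n2: "n2 = Suc n2'" using less.prems u v by (cases n2) auto
      have e1: "sh_fuel n1' a (y # b) = sh_fuel n2' a (y # b)"
        using less u v n1 n2 by (intro less.hyps) auto
      have e2: "sh_fuel n1' (x # a) b = sh_fuel n2' (x # a) b"
        using less u v n1 n2 by (intro less.hyps) auto
      have e3: "sh_fuel n1' a b = sh_fuel n2' a b"
        using less u v n1 n2 by (intro less.hyps) auto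
      have e4: "lin_ext (sh_fuel n1') (wvec [(j, 1)]) (sh_fuel n2' a b)
          = lin_ext (sh_fuel n2') (wvec [(j, 1)]) (sh_fuel n2' a b)" for j
      proof (rule lin_ext_cong)
        fix u0 v0 :: "('a::{field,finite}) word" assume "wvec [(j, 1)] u0 \<noteq> 0" "sh_fuel n2' a b v0 \<noteq> 0"
        hence "u0 = [(j, 1)]" "length v0 \<le> length a + length b" by (auto dest: wvec_nz shf_supp)
        thus "sh_fuel n1' u0 v0 = sh_fuel n2' u0 v0"
          using less u v n1 n2 by (intro less.hyps) auto
      qed
      show ?thesis unfolding u v n1 n2 sh_fuel.simps dia_of.simps e1 e2 e3 e4 ..
    qed
  qed
qed

lemma sw_fuel: "length u + length v \<le> n \<Longrightarrow> sh_fuel n u v = shuffle_word u v"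
  unfolding shuffle_word_def by (rule shf_fuel) auto

lemma sw_Nil1: "shuffle_word [] v = wvec v" by (simp add: shuffle_word_def)
lemma sw_Nil2: "shuffle_word u [] = wvec u" by (cases u) (simp_all add: shuffle_word_def)

lemma sw_supp: "shuffle_word u v w \<noteq> 0 \<Longrightarrow> length w \<le> length u + length v \<and> (good u \<longrightarrow> good v \<longrightarrow> good w)"
  unfolding shuffle_word_def by (rule shf_supp)
lemma sw_finite: "finite {w. shuffle_word u v w \<noteq> 0}"
  unfolding shuffle_word_def by (rule shf_finite)

lemma sw_cons:
  "shuffle_word (x # a) (y # b) = (\<lambda>w. prefix_lin x (shuffle_word a (y # b)) w
     + prefix_lin y (shuffle_word (x # a) b) w
     + prefix_lin (fst x + fst y, snd x * snd y) (shuffle_word a b) w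
     + (\<Sum>i\<in>{1..<fst x + fst y}. Delta (fst x) (fst y) (fst x + fst y - i)
         * prefix_lin (i, snd x * snd y) (lin_ext shuffle_word (wvec [(fst x + fst y - i, 1)]) (shuffle_word a b)) w))"
proof -
  define L where "L = Suc (length a + length b)"
  have sw: "shuffle_word (x # a) (y # b) = sh_fuel (Suc L) (x # a) (y # b)"
    by (simp add: shuffle_word_def L_def)
  have e1: "sh_fuel L a (y # b) = shuffle_word a (y # b)" by (rule sw_fuel) (simp add: L_def)
  have e2: "sh_fuel L (x # a) b = shuffle_word (x # a) b" by (rule sw_fuel) (simp add: L_def)
  have e3: "sh_fuel L a b = shuffle_word a b" by (rule sw_fuel) (simp add: L_def)
  have e4: "lin_ext (sh_fuel L) (wvec [(j, 1)]) (shuffle_word a b)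
          = lin_ext shuffle_word (wvec [(j, 1)]) (shuffle_word a b)" for j
  proof (rule lin_ext_cong)
    fix u0 v0 :: "('a::{field,finite}) word" assume "wvec [(j, 1)] u0 \<noteq> 0" "shuffle_word a b v0 \<noteq> 0"
    hence "u0 = [(j, 1)]" "length v0 \<le> length a + length b" by (auto dest: wvec_nz sw_supp)
    thus "sh_fuel L u0 v0 = shuffle_word u0 v0" by (intro sw_fuel) (simp add: L_def)
  qed
  show ?thesis unfolding sw sh_fuel.simps dia_of.simps e1 e2 e3 e4 by (simp only: add.assoc)
qed


lemma R_S_word: "S_word (int k) [(j, 1)] = (R k j :: 'a::{field,finite} fls)"
proof (induction k)
  case 0
  have "MonLt 0 = ({} :: 'a poly set)" by (simp add: MonLt_def)
  thus ?case by (simp add: S_word_neg R_def)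
next
  case (Suc k)
  have split: "MonLt (Suc k) = MonLt k \<union> (Mon k :: 'a poly set)"
    by (auto simp: MonLt_def Mon_def)
  have disj: "MonLt k \<inter> (Mon k :: 'a poly set) = {}" by (auto simp: MonLt_def Mon_def)
  have "R (Suc k) j = R k j + (Q k j :: 'a fls)"
    unfolding R_def Q_def split by (rule sum.union_disjoint) (auto simp: finite_MonLt finite_Mon disj)
  moreover have "S_word (int (Suc k)) [(j, 1)] = S_word (int k) [(j, 1)] + Pd k (j, 1) * (S_word (int k) [] :: 'a fls)"
  proof -
    have eqk: "int (Suc k) = int k + 1" by simp
    show ?thesis unfolding eqk using S_word_rec[of "int k" "(j, 1)" "[]"] by simp
  qed
  ultimately show ?case using Suc by (simp add: S_word_Nil Pd_def)
qed

lemma chenPd: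
  assumes "fst x \<ge> 1" "fst y \<ge> 1"
  shows "Pd k x * Pd k y = (Pd k (fst x + fst y, snd x * snd y) :: 'a::{field,finite} fls)
    + (\<Sum>i\<in>{1..<fst x + fst y}. fls_const (Delta (fst x) (fst y) (fst x + fst y - i))
        * Pd k (i, snd x * snd y) * S_word (int k) [(fst x + fst y - i, 1)])"
proof -
  have c: "fls_const (snd x ^ k) * fls_const (snd y ^ k) = fls_const ((snd x * snd y) ^ k)"
    by (simp add: power_mult_distrib)
  have "Pd k x * Pd k y = fls_const ((snd x * snd y) ^ k) * (Q k (fst x) * Q k (fst y))"
    unfolding Pd_def c[symmetric] by (simp add: algebra_simps)
  also have "\<dots> = fls_const ((snd x * snd y) ^ k) * Q k (fst x + fst y)
     + (\<Sum>i\<in>{1..<fst x + fst y}. fls_const (Delta (fst x) (fst y) (fst x + fst y - i))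
        * (fls_const ((snd x * snd y) ^ k) * Q k i) * R k (fst x + fst y - i))"
    unfolding chenD[OF assms] by (simp add: distrib_left sum_distrib_left algebra_simps)
  finally show ?thesis by (simp add: Pd_def R_S_word)
qed

definition supp :: "('a word \<Rightarrow> 'a::zero) \<Rightarrow> 'a word set" where
  "supp f = {w. f w \<noteq> 0}"

lemma SL_sup:
  assumes "finite W" "supp f \<subseteq> W"
  shows "S_lt d f = (\<Sum>w\<in>W. fls_const (f w) * S_word d w)"
  unfolding S_lt_def using assms
  by (intro sum.mono_neutral_left) (auto simp: supp_def)

lemma SL_add:
  assumes "finite (supp f)" "finite (supp g)"
  shows "S_lt d (\<lambda>w. f w + g w) = S_lt d f + S_lt d g"
proof -
  let ?W = "supp f \<union> supp g"
  have "S_lt d (\<lambda>w. f w + g w) = (\<Sum>w\<in>?W. fls_const (f w + g w) * S_word d w)"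
    using assms by (intro SL_sup) (auto simp: supp_def)
  also have "\<dots> = (\<Sum>w\<in>?W. fls_const (f w) * S_word d w) + (\<Sum>w\<in>?W. fls_const (g w) * S_word d w)"
    by (simp add: fls_const_add' distrib_right sum.distrib)
  also have "\<dots> = S_lt d f + S_lt d g"
    using assms by (simp add: SL_sup[of "supp f \<union> supp g" f] SL_sup[of "supp f \<union> supp g" g])
  finally show ?thesis .
qed

lemma SL_scale:
  assumes "finite (supp f)"
  shows "S_lt d (\<lambda>w. c * f w) = fls_const c * S_lt d f"
proof -
  have "S_lt d (\<lambda>w. c * f w) = (\<Sum>w\<in>supp f. fls_const (c * f w) * S_word d w)"
    using assms by (intro SL_sup) (auto simp: supp_def)
  also have "\<dots> = fls_const c * S_lt d f"
    using assms by (simp add: SL_sup[of "supp f"] sum_distrib_left mult.assoc fls_const_mult' del: fls_const_mult_const)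
  finally show ?thesis .
qed

lemma finite_supp_sum': "finite I \<Longrightarrow> (\<And>i. i \<in> I \<Longrightarrow> finite (supp (f i)))
   \<Longrightarrow> finite (supp (\<lambda>w. (\<Sum>i\<in>I. f i w)))"
  unfolding supp_def by (rule finite_supp_sum)

lemma SL_sum:
  assumes "finite I" "\<And>i. i \<in> I \<Longrightarrow> finite (supp (f i))"
  shows "S_lt d (\<lambda>w. \<Sum>i\<in>I. f i w) = (\<Sum>i\<in>I. S_lt d (f i))"
  using assms
proof (induction I rule: finite_induct)
  case empty
  show ?case by (simp add: S_lt_def)
next
  case (insert i I)
  have "S_lt d (\<lambda>w. \<Sum>i\<in>insert i I. f i w) = S_lt d (\<lambda>w. f i w + (\<Sum>i\<in>I. f i w))"
    using insert by simp
  also have "\<dots> = S_lt d (f i) + S_lt d (\<lambda>w. \<Sum>i\<in>I. f i w)"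
    using insert by (intro SL_add finite_supp_sum') auto
  finally show ?case using insert by simp
qed

lemma SL_wvec: "S_lt d (wvec u) = S_word d u"
proof -
  have "S_lt d (wvec u) = (\<Sum>w\<in>{u}. fls_const (wvec u w) * S_word d w)"
    by (rule SL_sup) (auto simp: supp_def wvec_def)
  thus ?thesis by (simp add: wvec_def)
qed

lemma supp_wvec: "supp (wvec u) = {u}" by (auto simp: supp_def wvec_def)

lemma SL_prefix:
  assumes "finite (supp f)"
  shows "S_lt d (prefix_lin l f) = (\<Sum>w\<in>supp f. fls_const (f w) * S_word d (l # w))"
proof -
  have "S_lt d (prefix_lin l f) = (\<Sum>w\<in>(\<lambda>w. l # w) ` supp f. fls_const (prefix_lin l f w) * S_word d w)"
    using assms supp_prefix[of l f] by (intro SL_sup) (auto simp: supp_def)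
  also have "\<dots> = (\<Sum>w\<in>supp f. fls_const (f w) * S_word d (l # w))"
    by (subst sum.reindex) (auto simp: inj_on_def prefix_lin_def)
  finally show ?thesis .
qed

lemma finite_supp_prefix': "finite (supp f) \<Longrightarrow> finite (supp (prefix_lin l f))"
  unfolding supp_def by (rule finite_supp_prefix)

lemma SL_prefix_rec:
  assumes "d \<ge> 0" "finite (supp f)"
  shows "S_lt (d + 1) (prefix_lin l f) = S_lt d (prefix_lin l f) + Pd (nat d) l * S_lt d f"
  unfolding SL_prefix[OF assms(2)] S_word_rec[OF assms(1)] S_lt_def[of d f]
  by (simp add: distrib_left sum.distrib sum_distrib_left supp_def algebra_simps)

lemma finite_supp_scale': "finite (supp f) \<Longrightarrow> finite (supp (\<lambda>w. c * f w :: 'a::field))"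
  unfolding supp_def by (rule finite_supp_scale)

lemma SL_lin_ext:
  assumes "finite (supp f)" "finite (supp g)" "\<And>u v. finite (supp (m u v))"
  shows "S_lt d (lin_ext m f g) = (\<Sum>u\<in>supp f. \<Sum>v\<in>supp g. fls_const (f u * g v) * S_lt d (m u v))"
proof -
  have "S_lt d (lin_ext m f g) = S_lt d (\<lambda>w. \<Sum>u\<in>supp f. \<Sum>v\<in>supp g. f u * g v * m u v w)"
    by (simp add: lin_ext_def supp_def)
  also have "\<dots> = (\<Sum>u\<in>supp f. S_lt d (\<lambda>w. \<Sum>v\<in>supp g. f u * g v * m u v w))"
    using assms by (intro SL_sum finite_supp_sum' finite_supp_scale' assms(3)) auto
  also have "\<dots> = (\<Sum>u\<in>supp f. \<Sum>v\<in>supp g. S_lt d (\<lambda>w. f u * g v * m u v w))"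
    using assms by (intro sum.cong refl SL_sum finite_supp_scale' assms(3)) auto
  also have "\<dots> = (\<Sum>u\<in>supp f. \<Sum>v\<in>supp g. fls_const (f u * g v) * S_lt d (m u v))"
    using assms by (intro sum.cong refl SL_scale) auto
  finally show ?thesis .
qed

lemma SL_neg:
  assumes "d \<le> 0" "finite (supp f)"
  shows "S_lt d f = fls_const (f [])"
proof -
  have "S_lt d f = (\<Sum>w\<in>insert [] (supp f). fls_const (f w) * S_word d w)"
    using assms by (intro SL_sup) auto
  also have "\<dots> = fls_const (f []) * S_word d [] + (\<Sum>w\<in>supp f - {[]}. fls_const (f w) * S_word d w)"
    using assms by (subst sum.insert_remove) auto
  also have "(\<Sum>w\<in>supp f - {[]}. fls_const (f w) * S_word d w) = 0"
  proof (intro sum.neutral ballI)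
    fix w assume "w \<in> supp f - {[]}"
    then obtain l w' where "w = l # w'" by (cases w) auto
    thus "fls_const (f w) * S_word d w = 0" using assms by (simp add: S_word_neg)
  qed
  finally show ?thesis by (simp add: S_word_Nil)
qed

lemma sw_finite': "finite (supp (shuffle_word u v))"
  unfolding supp_def by (rule sw_finite)

lemma sw_Nil_val: "shuffle_word u v [] = (if u = [] \<and> v = [] then 1 else 0)"
proof (cases u)
  case Nil thus ?thesis by (auto simp: sw_Nil1 wvec_def)
next
  case (Cons x a)
  show ?thesis
  proof (cases v)
    case Nil thus ?thesis using Cons by (auto simp: sw_Nil2 wvec_def)
  next
    case (Cons y b)
    thus ?thesis using \<open>u = x # a\<close> by (simp add: sw_cons prefix_lin_def)
  qed
qed

lemma SW_base:
  assumes "d \<le> 0"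
  shows "S_lt d (shuffle_word u v) = S_word d u * S_word d v"
proof -
  show ?thesis using assms
    by (cases u; cases v) (auto simp: SL_neg sw_finite' sw_Nil_val S_word_Nil S_word_neg)
qed


lemma SW_bilin:
  fixes f g :: "'a::{field,finite} word \<Rightarrow> 'a"
  assumes IH: "\<And>(u::'a word) v. good u \<Longrightarrow> good v \<Longrightarrow> S_lt d (shuffle_word u v) = S_word d u * S_word d v"
    and f: "finite (supp f)" and g: "finite (supp g)"
    and gf: "\<And>w. w \<in> supp f \<Longrightarrow> good w" and gg: "\<And>w. w \<in> supp g \<Longrightarrow> good w"
  shows "S_lt d (lin_ext shuffle_word f g) = S_lt d f * S_lt d g"
proof -
  have "S_lt d (lin_ext shuffle_word f g) = (\<Sum>u\<in>supp f. \<Sum>v\<in>supp g. fls_const (f u * g v) * S_lt d (shuffle_word u v))"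
    using f g by (intro SL_lin_ext sw_finite')
  also have "\<dots> = (\<Sum>u\<in>supp f. \<Sum>v\<in>supp g. (fls_const (f u) * S_word d u) * (fls_const (g v) * S_word d v))"
  proof (intro sum.cong refl)
    fix u v assume "u \<in> supp f" "v \<in> supp g"
    hence "S_lt d (shuffle_word u v) = S_word d u * S_word d v" by (intro IH gf gg)
    thus "fls_const (f u * g v) * S_lt d (shuffle_word u v) = (fls_const (f u) * S_word d u) * (fls_const (g v) * S_word d v)"
      by (simp add: algebra_simps)
  qed
  also have "\<dots> = S_lt d f * S_lt d g"
    by (simp add: S_lt_def supp_def sum_product)
  finally show ?thesis .
qed

lemma finite_supp_add': "finite (supp f) \<Longrightarrow> finite (supp g) \<Longrightarrow> finite (supp (\<lambda>w. f w + g w :: 'a::comm_monoid_add))"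
  unfolding supp_def by (rule finite_supp_add)

lemma finite_supp_G: "finite (supp (lin_ext shuffle_word (wvec u) (shuffle_word a b)))"
  unfolding supp_def by (intro finite_supp_lin_ext finite_supp_wvec sw_finite)

lemma SL_decomp:
  fixes x y :: "'a::{field,finite} letter"
  shows "S_lt d (shuffle_word (x # a) (y # b)) =
       S_lt d (prefix_lin x (shuffle_word a (y # b)))
     + S_lt d (prefix_lin y (shuffle_word (x # a) b))
     + S_lt d (prefix_lin (fst x + fst y, snd x * snd y) (shuffle_word a b))
     + (\<Sum>i\<in>{1..<fst x + fst y}. fls_const (Delta (fst x) (fst y) (fst x + fst y - i))
         * S_lt d (prefix_lin (i, snd x * snd y) (lin_ext shuffle_word (wvec [(fst x + fst y - i, 1)]) (shuffle_word a b))))"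
  unfolding sw_cons
  by (simp add: SL_add SL_sum SL_scale finite_supp_add' finite_supp_sum' finite_supp_scale'
      finite_supp_prefix' sw_finite' finite_supp_G)

lemma SW_step:
  fixes d :: int and u v :: "'a::{field,finite} word"
  assumes d0: "d \<ge> 0"
    and IH: "\<And>(u::'a word) v. good u \<Longrightarrow> good v \<Longrightarrow> S_lt d (shuffle_word u v) = S_word d u * S_word d v"
    and gu: "good u" and gv: "good v"
  shows "S_lt (d + 1) (shuffle_word u v) = S_word (d + 1) u * S_word (d + 1) v"
proof (cases u)
  case Nil thus ?thesis by (simp add: sw_Nil1 SL_wvec S_word_Nil)
next
  case (Cons x a)
  note u = this
  show ?thesis
  proof (cases v)
    case Nil thus ?thesis by (simp add: sw_Nil2 SL_wvec S_word_Nil)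
  next
    case (Cons y b)
    note v = this
    define n where "n = nat d"
    define z where "z = (fst x + fst y, snd x * snd y)"
    define F1 where "F1 = shuffle_word a (y # b)"
    define F2 where "F2 = shuffle_word (x # a) b"
    define F3 where "F3 = shuffle_word a b"
    define G where "G i = lin_ext shuffle_word (wvec [(fst x + fst y - i, 1)]) F3" for i
    define D where "D i = (fls_const (Delta (fst x) (fst y) (fst x + fst y - i)) :: 'a fls)" for i
    define I where "I = {1..<fst x + fst y}"
    have gx: "fst x \<ge> 1" "good a" using gu u by auto
    have gy: "fst y \<ge> 1" "good b" using gv v by auto
    have fin: "finite (supp F1)" "finite (supp F2)" "finite (supp F3)" "\<And>i. finite (supp (G i))"
      unfolding F1_def F2_def F3_def G_def by (auto intro: sw_finite' finite_supp_G)
    have dec: "S_lt e (shuffle_word u v) = S_lt e (prefix_lin x F1) + S_lt e (prefix_lin y F2)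
        + S_lt e (prefix_lin z F3) + (\<Sum>i\<in>I. D i * S_lt e (prefix_lin (i, snd x * snd y) (G i)))" for e
      unfolding u v F1_def F2_def F3_def G_def D_def z_def I_def by (rule SL_decomp)
    have rec: "S_lt (d + 1) (prefix_lin l F) = S_lt d (prefix_lin l F) + Pd n l * S_lt d F"
      if "finite (supp F)" for l and F :: "'a word \<Rightarrow> 'a"
      unfolding n_def using d0 that by (rule SL_prefix_rec)
    have "S_lt (d + 1) (shuffle_word u v) = S_lt d (shuffle_word u v)
        + Pd n x * S_lt d F1 + Pd n y * S_lt d F2 + Pd n z * S_lt d F3
        + (\<Sum>i\<in>I. D i * Pd n (i, snd x * snd y) * S_lt d (G i))"
      unfolding dec rec[OF fin(1)] rec[OF fin(2)] rec[OF fin(3)] rec[OF fin(4)]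
      by (simp add: algebra_simps sum.distrib sum_distrib_left)
    also have "S_lt d (G i) = S_word d [(fst x + fst y - i, 1)] * (S_word d a * S_word d b)" if "i \<in> I" for i
    proof -
      have "S_lt d (G i) = S_lt d (wvec [(fst x + fst y - i, 1)]) * S_lt d F3"
        unfolding G_def
      proof (rule SW_bilin[OF IH])
        show "finite (supp (wvec [(fst x + fst y - i, 1)]))" by (simp add: supp_wvec)
        show "finite (supp F3)" by (rule fin)
        show "good w" if "w \<in> supp (wvec [(fst x + fst y - i, 1)])" for w
          using that \<open>i \<in> I\<close> by (auto simp: supp_wvec I_def)
        show "good w" if "w \<in> supp F3" for w
          using that sw_supp[of a b w] gx gy by (auto simp: supp_def F3_def)
      qed
      thus ?thesis by (simp add: SL_wvec F3_def IH gx gy)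
    qed
    hence "(\<Sum>i\<in>I. D i * Pd n (i, snd x * snd y) * S_lt d (G i))
        = (\<Sum>i\<in>I. D i * Pd n (i, snd x * snd y) * S_word d [(fst x + fst y - i, 1)]) * (S_word d a * S_word d b)"
      by (simp add: sum_distrib_right mult.assoc)
    finally have L: "S_lt (d + 1) (shuffle_word u v) = S_word d u * S_word d v
        + Pd n x * (S_word d a * S_word d v) + Pd n y * (S_word d u * S_word d b)
        + Pd n z * (S_word d a * S_word d b)
        + (\<Sum>i\<in>I. D i * Pd n (i, snd x * snd y) * S_word d [(fst x + fst y - i, 1)]) * (S_word d a * S_word d b)"
      unfolding F1_def F2_def F3_def using gx gy gu gv u v by (simp add: IH)
    have ch: "Pd n x * Pd n y = Pd n z + (\<Sum>i\<in>I. D i * Pd n (i, snd x * snd y) * S_word d [(fst x + fst y - i, 1)])"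
      unfolding z_def D_def I_def using chenPd[OF gx(1) gy(1), of n] d0 by (simp add: n_def)
    have "S_word (d + 1) u * S_word (d + 1) v = (S_word d u + Pd n x * S_word d a) * (S_word d v + Pd n y * S_word d b)"
      unfolding u v n_def using d0 by (simp add: S_word_rec)
    also have "\<dots> = S_word d u * S_word d v + Pd n x * (S_word d a * S_word d v) + Pd n y * (S_word d u * S_word d b)
        + (Pd n x * Pd n y) * (S_word d a * S_word d b)"
      by (simp add: algebra_simps)
    also have "\<dots> = S_lt (d + 1) (shuffle_word u v)"
      unfolding L ch by (simp add: algebra_simps)
    finally show ?thesis ..
  qed
qed

lemma SW_all:
  fixes u v :: "'a::{field,finite} word"
  assumes "good u" "good v"
  shows "S_lt d (shuffle_word u v) = S_word d u * S_word d v"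
proof -
  have nat_case: "\<forall>u v :: 'a word. good u \<longrightarrow> good v \<longrightarrow> S_lt (int n) (shuffle_word u v) = S_word (int n) u * S_word (int n) v" for n
  proof (induction n)
    case 0 show ?case by (simp add: SW_base)
  next
    case (Suc n)
    have e: "int (Suc n) = int n + 1" by simp
    show ?case unfolding e using Suc by (auto intro!: SW_step)
  qed
  show ?thesis
  proof (cases "d \<le> 0")
    case True thus ?thesis by (rule SW_base)
  next
    case False
    hence "d = int (nat d)" by simp
    thus ?thesis using nat_case[of "nat d"] assms by metis
  qed
qed

lemma in_D_finite: "in_D f \<Longrightarrow> finite (supp f)"
  by (simp add: in_D_def supp_def)
lemma in_D_good: "in_D f \<Longrightarrow> w \<in> supp f \<Longrightarrow> good w"
  by (auto simp: in_D_def supp_def valid_word_def valid_letter_def good_def)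

theorem S_part:
  assumes "in_D a" "in_D b"
  shows "S_lt d (shuffle a b) = S_lt d a * S_lt d b"
  unfolding shuffle_def
  by (rule SW_bilin) (use assms in \<open>auto intro: SW_all in_D_finite in_D_good\<close>)


lemma tendsto_iff: "fls_tendsto F L \<longleftrightarrow> (\<forall>N. eventually (\<lambda>d. vb N (F d - L)) at_top)"
  by (simp add: fls_tendsto_def vb_def)

lemma tendsto_unique:
  assumes "fls_tendsto F L" "fls_tendsto F M" shows "L = M"
proof (rule fls_eqI)
  fix n
  have e1: "eventually (\<lambda>d. \<forall>k<n+1. fls_nth (F d) k = fls_nth L k) at_top"
    using assms(1) unfolding fls_tendsto_def by blast
  have e2: "eventually (\<lambda>d. \<forall>k<n+1. fls_nth (F d) k = fls_nth M k) at_top"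
    using assms(2) unfolding fls_tendsto_def by blast
  have "eventually (\<lambda>d. (\<forall>k<n+1. fls_nth (F d) k = fls_nth L k) \<and> (\<forall>k<n+1. fls_nth (F d) k = fls_nth M k)) at_top"
    by (rule eventually_conj[OF e1 e2])
  then obtain d0 :: int where "\<forall>d\<ge>d0. (\<forall>k<n+1. fls_nth (F d) k = fls_nth L k) \<and> (\<forall>k<n+1. fls_nth (F d) k = fls_nth M k)"
    by (auto simp: eventually_at_top_linorder)
  thus "fls_nth L n = fls_nth M n" by (metis less_add_one order_refl)
qed

lemma tendsto_vb0:
  assumes "fls_tendsto F L" "\<And>d. vb 0 (F d)" shows "vb 0 L"
proof -
  have "eventually (\<lambda>d. \<forall>k<0. fls_nth (F d) k = fls_nth L k) at_top"
    using assms unfolding fls_tendsto_def by auto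
  then obtain d0 :: int where "\<forall>d\<ge>d0. \<forall>k<0. fls_nth (F d) k = fls_nth L k"
    by (auto simp: eventually_at_top_linorder)
  thus ?thesis using assms(2)[of d0] by (auto simp: vb_def)
qed

lemma tendsto_add:
  fixes F G :: "int \<Rightarrow> 'a::field fls"
  assumes "fls_tendsto F L" "fls_tendsto G M"
  shows "fls_tendsto (\<lambda>d. F d + G d) (L + M)"
  unfolding tendsto_iff
proof
  fix N
  have "eventually (\<lambda>d. vb N (F d - L) \<and> vb N (G d - M)) at_top"
    using assms unfolding tendsto_iff by (intro eventually_conj) auto
  thus "eventually (\<lambda>d. vb N (F d + G d - (L + M))) at_top"
    by (rule eventually_mono) (auto simp: vb_def)
qed

lemma tendsto_scale:
  fixes F :: "int \<Rightarrow> 'a::field fls"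
  assumes "fls_tendsto F L"
  shows "fls_tendsto (\<lambda>d. fls_const c * F d) (fls_const c * L)"
  unfolding tendsto_iff
proof
  fix N
  have "eventually (\<lambda>d. vb N (F d - L)) at_top"
    using assms unfolding tendsto_iff by auto
  thus "eventually (\<lambda>d. vb N (fls_const c * F d - fls_const c * L)) at_top"
  proof (rule eventually_mono)
    fix d assume "vb N (F d - L)"
    hence "vb (0 + N) (fls_const c * (F d - L))" by (intro vb_mult vb_const)
    thus "vb N (fls_const c * F d - fls_const c * L)" by (simp add: right_diff_distrib)
  qed
qed

lemma tendsto_const: "fls_tendsto (\<lambda>d. L) L"
  by (simp add: fls_tendsto_def)

lemma tendsto_sum:
  fixes F :: "'b \<Rightarrow> int \<Rightarrow> 'a::field fls"
  assumes "finite I" "\<And>i. i \<in> I \<Longrightarrow> fls_tendsto (F i) (L i)"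
  shows "fls_tendsto (\<lambda>d. \<Sum>i\<in>I. F i d) (\<Sum>i\<in>I. L i)"
  using assms
proof (induction I rule: finite_induct)
  case empty thus ?case by (simp add: tendsto_const)
next
  case (insert i I)
  thus ?case by (simp add: tendsto_add)
qed

lemma tendsto_mult:
  fixes F G :: "int \<Rightarrow> 'a::field fls"
  assumes "fls_tendsto F L" "fls_tendsto G M" "\<And>d. vb 0 (G d)" "vb 0 L"
  shows "fls_tendsto (\<lambda>d. F d * G d) (L * M)"
  unfolding tendsto_iff
proof
  fix N
  have "eventually (\<lambda>d. vb N (F d - L) \<and> vb N (G d - M)) at_top"
    using assms unfolding tendsto_iff by (intro eventually_conj) auto
  thus "eventually (\<lambda>d. vb N (F d * G d - L * M)) at_top"
  proof (rule eventually_mono)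
    fix d assume H: "vb N (F d - L) \<and> vb N (G d - M)"
    have "vb (N + 0) ((F d - L) * G d)" using H assms(3) by (intro vb_mult) auto
    moreover have "vb (0 + N) (L * (G d - M))" using H assms(4) by (intro vb_mult) auto
    ultimately have "vb N ((F d - L) * G d + L * (G d - M))" by (simp add: vb_add)
    thus "vb N (F d * G d - L * M)" by (simp add: algebra_simps)
  qed
qed

lemma vb0_S_word: "vb 0 (S_word d w :: 'a::{field,finite} fls)"
  unfolding S_word_def
proof (intro vb_sum vb_prod)
  fix as :: "'a poly list" and i
  assume as: "as \<in> tuples_lt d (length w)" and i: "i \<in> {..<length w}"
  hence "as ! i \<noteq> 0" by (auto simp: tuples_lt_def)
  from vb_inv_embA[OF this]
  show "vb 0 (fls_const (snd (w ! i) ^ degree (as ! i)) / embA (as ! i) ^ fst (w ! i))"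
    by (rule vb_mono) simp
qed

lemma vb_Pd:
  assumes "fst x \<ge> 1"
  shows "vb (int k) (Pd k x :: 'a::{field,finite} fls)"
  unfolding Pd_alt
proof (intro vb_sum)
  fix a :: "'a poly" assume a: "a \<in> Mon k"
  hence "a \<noteq> 0" "degree a = k" by (auto simp: Mon_def)
  from vb_inv_embA[OF this(1)]
  show "vb (int k) (fls_const (snd x ^ degree a) / embA a ^ fst x)"
  proof (rule vb_mono)
    have "k * 1 \<le> k * fst x" using assms by (intro mult_le_mono2) auto
    thus "int k \<le> int (degree a * fst x)" using \<open>degree a = k\<close> by (simp del: of_nat_mult)
  qed
qed

lemma vb_S_word_step:
  assumes "d \<ge> 0" "good w"
  shows "vb d (S_word (d + 1) w - S_word d w :: 'a::{field,finite} fls)"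
proof (cases w)
  case Nil thus ?thesis by (simp add: S_word_Nil vb_zero)
next
  case (Cons x w')
  have "vb (d + 0) (Pd (nat d) x * S_word d w')"
    using assms Cons vb_Pd[of x "nat d"] by (intro vb_mult vb0_S_word) auto
  thus ?thesis using assms by (simp add: Cons S_word_rec)
qed

lemma vb_S_word_diff:
  assumes "0 \<le> d0" "d0 \<le> d" "good w"
  shows "vb d0 (S_word d w - S_word d0 w :: 'a::{field,finite} fls)"
proof -
  have "vb d0 (S_word (d0 + int n) w - S_word d0 w :: 'a fls)" for n
  proof (induction n)
    case 0 thus ?case by (simp add: vb_zero)
  next
    case (Suc n)
    have "vb (d0 + int n) (S_word (d0 + int n + 1) w - S_word (d0 + int n) w :: 'a fls)"
      using assms by (intro vb_S_word_step) auto
    hence "vb d0 (S_word (d0 + int n + 1) w - S_word (d0 + int n) w :: 'a fls)"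
      by (rule vb_mono) simp
    from vb_add[OF this Suc.IH] have "vb d0 (S_word (d0 + int n + 1) w - S_word d0 w :: 'a fls)" by simp
    moreover have eq: "d0 + int (Suc n) = d0 + int n + 1" by simp
    ultimately show ?case by (simp only: eq)
  qed
  from this[of "nat (d - d0)"] show ?thesis using assms by simp
qed

lemma zeta_word_tendsto:
  assumes "good w"
  shows "fls_tendsto (\<lambda>d. S_word d w) (zeta_word w :: 'a::{field,finite} fls)"
proof -
  define L :: "'a fls" where "L = Abs_fls (\<lambda>n. if n < 0 then 0 else fls_nth (S_word (n + 1) w) n)"
  have Lnth: "fls_nth L n = (if n < 0 then 0 else fls_nth (S_word (n + 1) w) n)" for n
    unfolding L_def by (rule nth_Abs_fls_lower_bound[of 0]) simp
  have T: "fls_tendsto (\<lambda>d. S_word d w) L"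
    unfolding fls_tendsto_def eventually_at_top_linorder
  proof
    fix N :: int
    show "\<exists>d0. \<forall>d\<ge>d0. \<forall>n<N. fls_nth (S_word d w) n = fls_nth L n"
    proof (intro exI allI impI)
      fix d n assume d: "d \<ge> max N 0" and n: "n < N"
      show "fls_nth (S_word d w) n = fls_nth L n"
      proof (cases "n < 0")
        case True thus ?thesis using vb0_S_word[of d w] by (simp add: Lnth vb_def)
      next
        case False
        have "vb (n + 1) (S_word d w - S_word (n + 1) w)"
          using False d n assms by (intro vb_S_word_diff) auto
        hence "fls_nth (S_word d w - S_word (n + 1) w) n = 0" by (simp add: vb_def)
        thus ?thesis using False by (simp add: Lnth)
      qed
    qed
  qed
  have "zeta_word w = L"
    unfolding zeta_word_def
  proof (rule the_equality)
    show "fls_tendsto (\<lambda>d. S_word d w) L" by (rule T)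
    fix M assume "fls_tendsto (\<lambda>d. S_word d w) M"
    thus "M = L" using tendsto_unique T by blast
  qed
  thus ?thesis using T by simp
qed

lemma zeta_A_tendsto:
  assumes "finite (supp f)" "\<And>w. w \<in> supp f \<Longrightarrow> good w"
  shows "fls_tendsto (\<lambda>d. S_lt d f) (zeta_A f)"
  unfolding S_lt_def zeta_A_def supp_def[symmetric]
  using assms by (intro tendsto_sum tendsto_scale zeta_word_tendsto) auto

lemma vb0_S_lt: "vb 0 (S_lt d f :: 'a::{field,finite} fls)"
  unfolding S_lt_def by (intro vb_sum) (rule vb_mult[of 0 _ 0, simplified], rule vb_const, rule vb0_S_word)

lemma supp_shuffle_good:
  assumes "in_D a" "in_D b"
  shows "finite (supp (shuffle a b))" "\<And>w. w \<in> supp (shuffle a b) \<Longrightarrow> good w"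
proof -
  show "finite (supp (shuffle a b))"
    unfolding shuffle_def supp_def using assms
    by (intro finite_supp_lin_ext sw_finite) (auto simp: in_D_def)
  fix w assume "w \<in> supp (shuffle a b)"
  then obtain u v where "a u \<noteq> 0" "b v \<noteq> 0" "shuffle_word u v w \<noteq> 0"
    unfolding shuffle_def supp_def by (blast dest: lin_ext_nz)
  moreover hence "good u" "good v" using assms in_D_good by (auto simp: supp_def)
  ultimately show "good w" using sw_supp by blast
qed

theorem zeta_part:
  assumes "in_D a" "in_D b"
  shows "zeta_A (shuffle a b) = zeta_A a * zeta_A b"
proof -
  have T1: "fls_tendsto (\<lambda>d. S_lt d (shuffle a b)) (zeta_A (shuffle a b))"
    using supp_shuffle_good[OF assms] by (intro zeta_A_tendsto) auto
  have Ta: "fls_tendsto (\<lambda>d. S_lt d a) (zeta_A a)"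
    using assms by (intro zeta_A_tendsto in_D_finite) (auto intro: in_D_good)
  have Tb: "fls_tendsto (\<lambda>d. S_lt d b) (zeta_A b)"
    using assms by (intro zeta_A_tendsto in_D_finite) (auto intro: in_D_good)
  have "fls_tendsto (\<lambda>d. S_lt d a * S_lt d b) (zeta_A a * zeta_A b)"
    by (rule tendsto_mult[OF Ta Tb vb0_S_lt tendsto_vb0[OF Ta vb0_S_lt]])
  hence T2: "fls_tendsto (\<lambda>d. S_lt d (shuffle a b)) (zeta_A a * zeta_A b)"
    using S_part[OF assms] by simp
  show ?thesis by (rule tendsto_unique[OF T1 T2])
qed


theorem theorem5p11:
  fixes a b :: "'a::{field,finite} word \<Rightarrow> 'a" and d :: int
  assumes "in_D a" and "in_D b"
  shows "S_lt d (shuffle a b) = S_lt d a * S_lt d b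
         \<and> zeta_A (shuffle a b) = zeta_A a * zeta_A b"
  using S_part[OF assms] zeta_part[OF assms] by blast

end
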